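(* Let $G=B_{n_0,\dots,n_g}$ be a banana graph of genus $g\ge2$, consider the twice-marked graph $(G,u,v)=(G,v_{0,0},v_{0,n_0})$ with torsion order $k$, and let $D=g\,v_{0,n_0}$. If $D$ is submodular, then $\tau^{u,v}_D(b)=g-b$ for all $0\le b\le g$; consequently $k\ge g$ and $\mathrm{inv}_k(\tau^{u,v}_D)\ge\binom{g+1}{2}$.
   Context: A graph is a finite, connected, loopless multigraph (parallel edges allowed); its genus is $g=|E(G)|-|V(G)|+1$. A divisor is an element of the free abelian group on $V(G)$. Linear equivalence $\sim$ is generated by chip-firing (firing $w$ subtracts $\mathrm{val}(w)$ chips from $w$ and adds to each other vertex the number of edges joining it to $w$). The rank $r(D)$ is $-1$ if $D$ is not equivalent to an effective divisor, else the largest $r\ge0$ such that $D-E$ is equivalent to an effective divisor for every effective $E$ of degree $r$. $\delta(P)$ is $1$ if $P$ holds and $0$ otherwise. A twice-marked graph $(G,u,v)$ is a graph with two chosen vertices; its torsion order is the least $k\ge1$ with $ku\sim kv$. A twist of $D$ is $D+au+bv$. $\Delta(D)=r(D)-r(D-u)-r(D-v)+r(D-u-v)$. $D$ is submodular if $\Delta(D')\ge0$ for all twists $D'$. If $D$ is submodular, its transmission permutation $\tau^{u,v}_D$ is the unique bijection $\mathbb Z\to\mathbb Z$ with $\delta(\tau^{u,v}_D(b)=a)=\Delta(D+au-bv)$ for all $a,b$; it satisfies $\tau^{u,v}_D(n+k)=\tau^{u,v}_D(n)+k$ when $ku\sim kv$. An inversion of a bijection $\tau$ is a pair $(a,b)$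 with $a<b$, $\tau(a)>\tau(b)$; two inversions $(a,b),(a',b')$ are $k$-equivalent if $a-a'=b-b'\equiv0\pmod k$; $\mathrm{inv}_k(\tau)$ is the number of classes. For positive integers $n_0,\dots,n_g$, the banana graph $B_{n_0,\dots,n_g}$ is obtained by joining two vertices by $g+1$ internally disjoint paths of lengths $n_0,\dots,n_g$; it has genus $g$. Its vertices are labelled $v_{\alpha,i}$ ($0\le\alpha\le g$, $0\le i\le n_\alpha$), with $v_{\alpha,i}$ at distance $i$ from $v_{0,0}$ along the $\alpha$-th path; $v_{0,0}$ and $v_{0,n_0}$ are the two multivalent vertices. *)

theory Defs
  imports Main
begin

text \<open>A multigraph is given by a finite vertex set V and a symmetric edge-multiplicity
function m (m x y = number of edges joining x and y). Divisors are integer-valued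
functions; only their values on V matter.\<close>

definition ind :: "'v \<Rightarrow> 'v \<Rightarrow> int" where
  "ind w x = (if x = w then 1 else 0)"

definition effective :: "'v set \<Rightarrow> ('v \<Rightarrow> int) \<Rightarrow> bool" where
  "effective V D \<longleftrightarrow> (\<forall>x\<in>V. D x \<ge> 0)"

definition degree :: "'v set \<Rightarrow> ('v \<Rightarrow> int) \<Rightarrow> int" where
  "degree V D = (\<Sum>x\<in>V. D x)"

text \<open>Linear equivalence: D' is obtained from D by firing each vertex w exactly f w times
(negative = borrowing). Firing w removes val(w) chips from w and gives m x w chips to x.\<close>
definition lin_equiv :: "'v set \<Rightarrow> ('v \<Rightarrow> 'v \<Rightarrow> nat) \<Rightarrow> ('v \<Rightarrow> int) \<Rightarrow> ('v \<Rightarrow> int) \<Rightarrow> bool" where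
  "lin_equiv V m D D' \<longleftrightarrow>
     (\<exists>f :: 'v \<Rightarrow> int. \<forall>x\<in>V. D' x = D x - (\<Sum>y\<in>V. int (m x y) * (f x - f y)))"

definition rank :: "'v set \<Rightarrow> ('v \<Rightarrow> 'v \<Rightarrow> nat) \<Rightarrow> ('v \<Rightarrow> int) \<Rightarrow> int" where
  "rank V m D =
     (if \<not> (\<exists>F. effective V F \<and> lin_equiv V m D F) then -1
      else int (GREATEST r::nat. \<forall>E. effective V E \<and> degree V E = int r \<longrightarrow>
                 (\<exists>F. effective V F \<and> lin_equiv V m (\<lambda>x. D x - E x) F)))"

definition torsion_order :: "'v set \<Rightarrow> ('v \<Rightarrow> 'v \<Rightarrow> nat) \<Rightarrow> 'v \<Rightarrow> 'v \<Rightarrow> nat" where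
  "torsion_order V m u v =
     (LEAST k::nat. k \<ge> 1 \<and> lin_equiv V m (\<lambda>x. int k * ind u x) (\<lambda>x. int k * ind v x))"

definition twist :: "'v \<Rightarrow> 'v \<Rightarrow> ('v \<Rightarrow> int) \<Rightarrow> int \<Rightarrow> int \<Rightarrow> ('v \<Rightarrow> int)" where
  "twist u v D a b = (\<lambda>x. D x + a * ind u x + b * ind v x)"

definition Delta :: "'v set \<Rightarrow> ('v \<Rightarrow> 'v \<Rightarrow> nat) \<Rightarrow> 'v \<Rightarrow> 'v \<Rightarrow> ('v \<Rightarrow> int) \<Rightarrow> int" where
  "Delta V m u v D = rank V m D - rank V m (twist u v D (-1) 0) - rank V m (twist u v D 0 (-1))
                     + rank V m (twist u v D (-1) (-1))"

definition submodular :: "'v set \<Rightarrow> ('v \<Rightarrow> 'v \<Rightarrow> nat) \<Rightarrow> 'v \<Rightarrow> 'v \<Rightarrow> ('v \<Rightarrow> int) \<Rightarrow> bool" where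
  "submodular V m u v D \<longleftrightarrow> (\<forall>a b. Delta V m u v (twist u v D a b) \<ge> 0)"

definition trans_perm :: "'v set \<Rightarrow> ('v \<Rightarrow> 'v \<Rightarrow> nat) \<Rightarrow> 'v \<Rightarrow> 'v \<Rightarrow> ('v \<Rightarrow> int) \<Rightarrow> int \<Rightarrow> int" where
  "trans_perm V m u v D = (THE \<tau>. bij \<tau> \<and>
      (\<forall>a b. Delta V m u v (twist u v D a (-b)) = (if \<tau> b = a then 1 else 0)))"

definition inversions :: "(int \<Rightarrow> int) \<Rightarrow> (int \<times> int) set" where
  "inversions \<tau> = {(a, b). a < b \<and> \<tau> a > \<tau> b}"

definition k_equiv :: "nat \<Rightarrow> (int \<Rightarrow> int) \<Rightarrow> ((int \<times> int) \<times> (int \<times> int)) set" where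
  "k_equiv k \<tau> = {((a, b), (a', b')). (a, b) \<in> inversions \<tau> \<and> (a', b') \<in> inversions \<tau> \<and>
                     a - a' = b - b' \<and> int k dvd (a - a')}"

definition inv_k :: "nat \<Rightarrow> (int \<Rightarrow> int) \<Rightarrow> nat" where
  "inv_k k \<tau> = card (inversions \<tau> // k_equiv k \<tau>)"

text \<open>Vertex v_{alpha,i} of B_{n_0..n_g}; canonical representatives: (0,i) for 0<=i<=n_0
 (so v_{alpha,0} = (0,0) and v_{alpha,n_alpha} = (0,n_0)), and (alpha,i) for internal vertices.\<close>
definition banana_vert :: "(nat \<Rightarrow> nat) \<Rightarrow> nat \<Rightarrow> nat \<Rightarrow> nat \<times> nat" where
  "banana_vert ns \<alpha> i = (if i = 0 then (0, 0) else if i = ns \<alpha> then (0, ns 0) else (\<alpha>, i))"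

definition banana_V :: "nat \<Rightarrow> (nat \<Rightarrow> nat) \<Rightarrow> (nat \<times> nat) set" where
  "banana_V g ns = {banana_vert ns \<alpha> i | \<alpha> i. \<alpha> \<le> g \<and> i \<le> ns \<alpha>}"

definition banana_m :: "nat \<Rightarrow> (nat \<Rightarrow> nat) \<Rightarrow> nat \<times> nat \<Rightarrow> nat \<times> nat \<Rightarrow> nat" where
  "banana_m g ns x y = card {(\<alpha>, i). \<alpha> \<le> g \<and> i < ns \<alpha> \<and>
       {banana_vert ns \<alpha> i, banana_vert ns \<alpha> (Suc i)} = {x, y}}"

end

theory Submission
  imports Defs
begin


definition lap :: "'v set \<Rightarrow> ('v \<Rightarrow> 'v \<Rightarrow> nat) \<Rightarrow> ('v \<Rightarrow> int) \<Rightarrow> 'v \<Rightarrow> int" where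
  "lap V m f x = (\<Sum>y\<in>V. int (m x y) * (f x - f y))"

definition prin :: "'v set \<Rightarrow> ('v \<Rightarrow> 'v \<Rightarrow> nat) \<Rightarrow> ('v \<Rightarrow> int) \<Rightarrow> bool" where
  "prin V m h \<longleftrightarrow> (\<exists>f. \<forall>x\<in>V. h x = lap V m f x)"

lemma lin_equiv_prin: "lin_equiv V m D D' \<longleftrightarrow> prin V m (\<lambda>x. D x - D' x)"
  unfolding lin_equiv_def prin_def lap_def
  by (intro ex_cong1 ball_cong) auto

lemma lap_lin: "lap V m (\<lambda>x. a * f x + b * g x) x = a * lap V m f x + b * lap V m g x"
  unfolding lap_def by (simp add: sum_distrib_left sum.distrib[symmetric] algebra_simps)

lemma prin_lin: "prin V m h \<Longrightarrow> prin V m k \<Longrightarrow> prin V m (\<lambda>x. a * h x + b * k x)"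
  unfolding prin_def
proof (elim exE)
  fix f1 f2 assume h: "\<forall>x\<in>V. h x = lap V m f1 x" and k: "\<forall>x\<in>V. k x = lap V m f2 x"
  show "\<exists>f. \<forall>x\<in>V. a * h x + b * k x = lap V m f x"
    by (rule exI[of _ "\<lambda>x. a * f1 x + b * f2 x"]) (simp add: lap_lin h k)
qed

lemma prin_cong: "prin V m h \<Longrightarrow> (\<And>x. x\<in>V \<Longrightarrow> h x = k x) \<Longrightarrow> prin V m k"
  unfolding prin_def by auto

lemma prin_zero: "prin V m (\<lambda>x. 0)"
  unfolding prin_def lap_def by (rule exI[of _ "\<lambda>x. 0"]) simp

lemma prin_lap: "prin V m (lap V m f)"
  unfolding prin_def by auto

lemma prin_sum: "finite A \<Longrightarrow> (\<And>i. i\<in>A \<Longrightarrow> prin V m (h i)) \<Longrightarrow> prin V m (\<lambda>x. \<Sum>i\<in>A. h i x)"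
proof (induction A rule: finite_induct)
  case empty then show ?case by (simp add: prin_zero)
next
  case (insert a A)
  have "prin V m (\<lambda>x. 1 * h a x + 1 * (\<Sum>i\<in>A. h i x))"
    by (rule prin_lin) (use insert in auto)
  then show ?case using insert by simp
qed

lemma sum_lap_zero:
  assumes sym: "\<And>x y. m x y = m y x"
  shows "(\<Sum>x\<in>V. lap V m f x) = 0"
proof -
  have "(\<Sum>x\<in>V. lap V m f x) = (\<Sum>x\<in>V. \<Sum>y\<in>V. int (m x y) * f x) - (\<Sum>x\<in>V. \<Sum>y\<in>V. int (m x y) * f y)"
    by (simp add: lap_def sum_subtractf right_diff_distrib)
  also have "(\<Sum>x\<in>V. \<Sum>y\<in>V. int (m x y) * f y) = (\<Sum>y\<in>V. \<Sum>x\<in>V. int (m x y) * f y)"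
    by (rule sum.swap)
  also have "\<dots> = (\<Sum>x\<in>V. \<Sum>y\<in>V. int (m x y) * f x)"
    by (simp add: sym)
  finally show ?thesis by simp
qed

lemma ind_mult: "c * ind w x = (if x = w then c else 0)"
  by (simp add: ind_def)

lemma sum_ind_c: "finite V \<Longrightarrow> w \<in> V \<Longrightarrow> (\<Sum>x\<in>V. c * ind w x) = c"
  by (simp add: ind_mult sum.delta)

lemma sum_ind: "finite V \<Longrightarrow> w \<in> V \<Longrightarrow> (\<Sum>x\<in>V. ind w x) = 1"
  by (simp add: ind_def sum.delta)

lemma sum_c_ind: "finite V \<Longrightarrow> y \<in> V \<Longrightarrow> (\<Sum>x\<in>V. c x * ind x y) = c y"
  by (simp add: ind_def sum.delta' if_distrib cong: if_cong)

lemma degree_diff: "degree V (\<lambda>x. D x - E x) = degree V D - degree V E"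
  unfolding degree_def by (simp add: sum_subtractf)

lemma degree_add: "degree V (\<lambda>x. D x + E x) = degree V D + degree V E"
  unfolding degree_def by (simp add: sum.distrib)

lemma degree_add_ind: "finite V \<Longrightarrow> w \<in> V \<Longrightarrow> degree V (\<lambda>x. E x + ind w x) = degree V E + 1"
  unfolding degree_def by (simp add: sum.distrib sum_ind)

lemma effective_deg: "effective V E \<Longrightarrow> 0 \<le> degree V E"
  unfolding effective_def degree_def by (simp add: sum_nonneg)

lemma lin_equiv_cong1: "(\<And>x. x\<in>V \<Longrightarrow> D1 x = D2 x) \<Longrightarrow> lin_equiv V m D1 F = lin_equiv V m D2 F"
  unfolding lin_equiv_def by simp

definition ok :: "'v set \<Rightarrow> ('v \<Rightarrow> 'v \<Rightarrow> nat) \<Rightarrow> ('v \<Rightarrow> int) \<Rightarrow> nat \<Rightarrow> bool" where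
  "ok V m D r \<longleftrightarrow> (\<forall>E. effective V E \<and> degree V E = int r \<longrightarrow>
                 (\<exists>F. effective V F \<and> lin_equiv V m (\<lambda>x. D x - E x) F))"

lemma rank_alt: "rank V m D = (if \<not> (\<exists>F. effective V F \<and> lin_equiv V m D F) then -1
      else int (GREATEST r. ok V m D r))"
  unfolding rank_def ok_def by simp

locale dg =
  fixes V :: "'v set" and m :: "'v \<Rightarrow> 'v \<Rightarrow> nat"
  assumes finV: "finite V" and neV: "V \<noteq> {}" and msym: "\<And>x y. m x y = m y x"
begin

lemma lin_equiv_deg: "lin_equiv V m D D' \<Longrightarrow> degree V D = degree V D'"
proof -
  assume "lin_equiv V m D D'"
  then obtain f where f: "\<forall>x\<in>V. D x - D' x = lap V m f x" unfolding lin_equiv_prin prin_def by auto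
  have "degree V D - degree V D' = (\<Sum>x\<in>V. D x - D' x)"
    by (simp add: degree_def sum_subtractf)
  also have "\<dots> = (\<Sum>x\<in>V. lap V m f x)" by (rule sum.cong) (auto simp: f)
  also have "\<dots> = 0" using sum_lap_zero msym by blast
  finally show ?thesis by simp
qed

lemma ok_0: "ok V m D 0 \<longleftrightarrow> (\<exists>F. effective V F \<and> lin_equiv V m D F)"
proof
  assume "ok V m D 0"
  then have "\<exists>F. effective V F \<and> lin_equiv V m (\<lambda>x. D x - 0) F"
    unfolding ok_def by (erule_tac x="\<lambda>x. 0" in allE) (simp add: effective_def degree_def)
  then show "\<exists>F. effective V F \<and> lin_equiv V m D F" by simp
next
  assume H: "\<exists>F. effective V F \<and> lin_equiv V m D F"
  show "ok V m D 0" unfolding ok_def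
  proof (intro allI impI)
    fix E assume E: "effective V E \<and> degree V E = int 0"
    then have "\<forall>x\<in>V. E x = 0" using finV unfolding effective_def degree_def
      by (subst sum_nonneg_eq_0_iff[symmetric]) auto
    then have "lin_equiv V m (\<lambda>x. D x - E x) F = lin_equiv V m D F" for F
      by (intro lin_equiv_cong1) auto
    then show "\<exists>F. effective V F \<and> lin_equiv V m (\<lambda>x. D x - E x) F" using H by simp
  qed
qed

lemma chip_eff: "0 \<le> c \<Longrightarrow> effective V (\<lambda>x. c * ind w x)"
  unfolding effective_def ind_def by simp

lemma chip_deg: "w \<in> V \<Longrightarrow> degree V (\<lambda>x. c * ind w x) = c"
  unfolding degree_def using finV by (simp add: sum_ind_c)

lemma ok_le_deg: "ok V m D n \<Longrightarrow> int n \<le> degree V D"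
proof -
  assume H: "ok V m D n"
  obtain w where w: "w \<in> V" using neV by auto
  from H obtain F where F: "effective V F" "lin_equiv V m (\<lambda>x. D x - int n * ind w x) F"
    unfolding ok_def using chip_eff[of "int n" w] chip_deg[OF w, of "int n"] by fastforce
  have "degree V (\<lambda>x. D x - int n * ind w x) = degree V F" using F(2) lin_equiv_deg by blast
  then have "degree V D - int n = degree V F" using degree_diff chip_deg[OF w] by metis
  then show ?thesis using effective_deg[OF F(1)] by simp
qed

lemma ok_Suc: "ok V m D (Suc n) \<Longrightarrow> ok V m D n"
  unfolding ok_def
proof (intro allI impI)
  fix E assume H: "\<forall>E. effective V E \<and> degree V E = int (Suc n) \<longrightarrow>
        (\<exists>F. effective V F \<and> lin_equiv V m (\<lambda>x. D x - E x) F)"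
    and E: "effective V E \<and> degree V E = int n"
  obtain w where w: "w \<in> V" using neV by auto
  let ?E = "\<lambda>x. E x + ind w x"
  have "effective V ?E" using E unfolding effective_def ind_def by auto
  moreover have "degree V ?E = int (Suc n)" using E degree_add_ind[OF finV w] by simp
  ultimately obtain F where F: "effective V F" "lin_equiv V m (\<lambda>x. D x - ?E x) F" using H by blast
  let ?F = "\<lambda>x. F x + 1 * ind w x"
  have "effective V ?F" using F unfolding effective_def ind_def by auto
  moreover have "lin_equiv V m (\<lambda>x. D x - E x) ?F"
    using F(2) unfolding lin_equiv_prin by (rule prin_cong) simp
  ultimately show "\<exists>F. effective V F \<and> lin_equiv V m (\<lambda>x. D x - E x) F" by blast
qed

lemma ok_le: "ok V m D n \<Longrightarrow> k \<le> n \<Longrightarrow> ok V m D k"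
  by (induction n) (auto dest: ok_Suc simp: le_Suc_eq)

lemma rank_ge_iff: "int n \<le> rank V m D \<longleftrightarrow> ok V m D n"
proof (cases "\<exists>F. effective V F \<and> lin_equiv V m D F")
  case True
  then have o0: "ok V m D 0" using ok_0 by simp
  have bd: "\<And>y. ok V m D y \<Longrightarrow> y \<le> nat (degree V D)" using ok_le_deg by fastforce
  have G: "ok V m D (GREATEST r. ok V m D r)" by (rule GreatestI_nat[where P="ok V m D", OF o0 bd])
  have "ok V m D n \<longleftrightarrow> n \<le> (GREATEST r. ok V m D r)"
    using Greatest_le_nat[where P="ok V m D", OF _ bd] ok_le[OF G] by blast
  then show ?thesis using True by (simp add: rank_alt)
next
  case False
  then have "\<not> ok V m D n" using ok_le[of D n 0] ok_0 by auto
  then show ?thesis using False by (simp add: rank_alt)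
qed

lemma rank_ge_m1: "-1 \<le> rank V m D"
  by (simp add: rank_alt)

lemma rank_nonneg_iff: "0 \<le> rank V m D \<longleftrightarrow> (\<exists>F. effective V F \<and> lin_equiv V m D F)"
  using rank_ge_iff[of 0 D] ok_0 by simp

lemma int_eqI:
  fixes x y :: int
  assumes "-1 \<le> x" "-1 \<le> y" "\<And>n::nat. int n \<le> x \<longleftrightarrow> int n \<le> y"
  shows "x = y"
proof (rule ccontr)
  assume "x \<noteq> y"
  then consider "x < y" | "y < x" by linarith
  then show False
  proof cases
    case 1 then show False using assms(3)[of "nat y"] assms(1) by simp
  next
    case 2 then show False using assms(3)[of "nat x"] assms(2) by simp
  qed
qed

lemma rank_eqI: "(\<And>n. ok V m D n \<longleftrightarrow> ok V m D' n) \<Longrightarrow> rank V m D = rank V m D'"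
  by (rule int_eqI) (auto simp: rank_ge_m1 rank_ge_iff)

lemma rank_equiv: assumes "lin_equiv V m D D'" shows "rank V m D = rank V m D'"
proof (rule rank_eqI)
  fix n
  have P: "prin V m (\<lambda>x. D x - D' x)" using assms lin_equiv_prin by auto
  have "lin_equiv V m (\<lambda>x. D x - E x) F \<longleftrightarrow> lin_equiv V m (\<lambda>x. D' x - E x) F" for E F
  proof
    assume "lin_equiv V m (\<lambda>x. D x - E x) F"
    then have "prin V m (\<lambda>x. D x - E x - F x)" unfolding lin_equiv_prin .
    from prin_lin[OF this P, of 1 "-1"] show "lin_equiv V m (\<lambda>x. D' x - E x) F"
      unfolding lin_equiv_prin by (rule prin_cong) simp
  next
    assume "lin_equiv V m (\<lambda>x. D' x - E x) F"
    then have "prin V m (\<lambda>x. D' x - E x - F x)" unfolding lin_equiv_prin .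
    from prin_lin[OF this P, of 1 "1"] show "lin_equiv V m (\<lambda>x. D x - E x) F"
      unfolding lin_equiv_prin by (rule prin_cong) simp
  qed
  then show "ok V m D n \<longleftrightarrow> ok V m D' n" unfolding ok_def by simp
qed

lemma rank_cong: "(\<And>x. x \<in> V \<Longrightarrow> D x = D' x) \<Longrightarrow> rank V m D = rank V m D'"
  by (rule rank_equiv) (simp add: lin_equiv_prin prin_cong[OF prin_zero])

lemma ok_minus1: assumes "w \<in> V" "ok V m (\<lambda>x. D x - ind w x) n" shows "ok V m D n"
  unfolding ok_def
proof (intro allI impI)
  fix E assume E: "effective V E \<and> degree V E = int n"
  then obtain F where F: "effective V F" "lin_equiv V m (\<lambda>x. D x - ind w x - E x) F"
    using assms(2) unfolding ok_def by blast
  let ?F = "\<lambda>x. F x + 1 * ind w x"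
  have "effective V ?F" using F unfolding effective_def ind_def by auto
  moreover have "lin_equiv V m (\<lambda>x. D x - E x) ?F"
    using F(2) unfolding lin_equiv_prin by (rule prin_cong) simp
  ultimately show "\<exists>F. effective V F \<and> lin_equiv V m (\<lambda>x. D x - E x) F" by blast
qed

lemma ok_minus2: assumes "w \<in> V" "ok V m D (Suc n)" shows "ok V m (\<lambda>x. D x - ind w x) n"
  unfolding ok_def
proof (intro allI impI)
  fix E assume E: "effective V E \<and> degree V E = int n"
  let ?E = "\<lambda>x. E x + ind w x"
  have "effective V ?E" using E unfolding effective_def ind_def by auto
  moreover have "degree V ?E = int (Suc n)" using E degree_add_ind[OF finV assms(1)] by simp
  ultimately obtain F where F: "effective V F" "lin_equiv V m (\<lambda>x. D x - ?E x) F"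
    using assms(2) unfolding ok_def by blast
  moreover have "lin_equiv V m (\<lambda>x. D x - ?E x) F = lin_equiv V m (\<lambda>x. D x - ind w x - E x) F"
    by (rule lin_equiv_cong1) simp
  ultimately show "\<exists>F. effective V F \<and> lin_equiv V m (\<lambda>x. D x - ind w x - E x) F" by auto
qed

lemma rank_minus_le: assumes "w \<in> V" shows "rank V m (\<lambda>x. D x - ind w x) \<le> rank V m D"
proof (cases "rank V m (\<lambda>x. D x - ind w x) = -1")
  case True then show ?thesis using rank_ge_m1 by simp
next
  case False
  then have "0 \<le> rank V m (\<lambda>x. D x - ind w x)" using rank_ge_m1[of "\<lambda>x. D x - ind w x"] by linarith
  then obtain n where n: "rank V m (\<lambda>x. D x - ind w x) = int n" using nonneg_eq_int by blast
  then have "ok V m (\<lambda>x. D x - ind w x) n" using rank_ge_iff by (metis order_refl)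
  then have "ok V m D n" using ok_minus1[OF assms] by blast
  then show ?thesis using n rank_ge_iff by simp
qed

lemma rank_minus_ge: assumes "w \<in> V" shows "rank V m D - 1 \<le> rank V m (\<lambda>x. D x - ind w x)"
proof (cases "rank V m D \<le> 0")
  case True then show ?thesis using rank_ge_m1[of "\<lambda>x. D x - ind w x"] by simp
next
  case False
  define n where "n = nat (rank V m D - 1)"
  have n: "rank V m D = int (Suc n)" using False unfolding n_def by simp
  then have "ok V m D (Suc n)" using rank_ge_iff by (metis order_refl)
  then have "ok V m (\<lambda>x. D x - ind w x) n" using ok_minus2[OF assms] by blast
  then show ?thesis using n rank_ge_iff by simp
qed

lemma rank_neg: assumes "degree V D < 0" shows "rank V m D = -1"
proof -
  have "\<not> (\<exists>F. effective V F \<and> lin_equiv V m D F)"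
    using assms lin_equiv_deg effective_deg by fastforce
  then show ?thesis by (simp add: rank_alt)
qed

lemma rank_lower:
  assumes HC: "\<And>E. C \<le> degree V E \<Longrightarrow> \<exists>F. effective V F \<and> lin_equiv V m E F"
  shows "degree V D - C \<le> rank V m D"
proof (cases "degree V D - C < 0")
  case True then show ?thesis using rank_ge_m1[of D] by simp
next
  case False
  have "ok V m D (nat (degree V D - C))" unfolding ok_def
  proof (intro allI impI)
    fix E assume E: "effective V E \<and> degree V E = int (nat (degree V D - C))"
    then have "C \<le> degree V (\<lambda>x. D x - E x)" unfolding degree_diff using False by simp
    then show "\<exists>F. effective V F \<and> lin_equiv V m (\<lambda>x. D x - E x) F" using HC by blast
  qed
  then have "int (nat (degree V D - C)) \<le> rank V m D" using rank_ge_iff by blast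
  then show ?thesis using False by simp
qed

lemma dhar:
  assumes q: "q \<in> V" "D q < 0"
    and H: "\<And>S. S \<subseteq> V - {q} \<Longrightarrow> S \<noteq> {} \<Longrightarrow> \<exists>x\<in>S. D x < (\<Sum>y\<in>V-S. int (m x y))"
  shows "\<not> (\<exists>F. effective V F \<and> lin_equiv V m D F)"
proof
  assume "\<exists>F. effective V F \<and> lin_equiv V m D F"
  then obtain F f where F: "effective V F" and f: "\<forall>x\<in>V. F x = D x - lap V m f x"
    unfolding lin_equiv_def lap_def by blast
  define M where "M = Max (f ` V)"
  define S where "S = {x\<in>V. f x = M}"
  have fle: "\<And>y. y \<in> V \<Longrightarrow> f y \<le> M" unfolding M_def using finV by simp
  have "M \<in> f ` V" unfolding M_def using finV neV by simp
  then have Sne: "S \<noteq> {}" unfolding S_def by auto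
  have key: "(\<Sum>y\<in>V-S. int (m x y)) \<le> lap V m f x" if x: "x \<in> S" for x
  proof -
    have "(\<Sum>y\<in>V-S. int (m x y)) = (\<Sum>y\<in>V. if y \<notin> S then int (m x y) else 0)"
      using finV sum.inter_filter[of V "\<lambda>y. int (m x y)" "\<lambda>y. y \<notin> S"]
      by (simp add: set_diff_eq)
    also have "\<dots> \<le> (\<Sum>y\<in>V. int (m x y) * (f x - f y))"
    proof (rule sum_mono)
      fix y assume y: "y \<in> V"
      show "(if y \<notin> S then int (m x y) else 0) \<le> int (m x y) * (f x - f y)"
      proof (cases "y \<in> S")
        case True then show ?thesis using x S_def by simp
      next
        case False
        then have "f y < M" using fle[OF y] y S_def by auto
        then have "1 \<le> f x - f y" using x S_def by auto
        then show ?thesis using False by (simp add: mult_le_cancel_left1)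
      qed
    qed
    finally show ?thesis unfolding lap_def .
  qed
  show False
  proof (cases "q \<in> S")
    case True
    have "0 \<le> (\<Sum>y\<in>V-S. int (m q y))" by (simp add: sum_nonneg)
    then have "F q < 0" using key[OF True] f q by auto
    then show False using F q unfolding effective_def by auto
  next
    case False
    then have "S \<subseteq> V - {q}" unfolding S_def by auto
    then obtain x where x: "x \<in> S" "D x < (\<Sum>y\<in>V-S. int (m x y))" using H Sne by blast
    then have "F x < 0" using key[OF x(1)] f S_def by auto
    then show False using F x S_def unfolding effective_def by auto
  qed
qed

end


lemma jump_unique:
  fixes h :: "int \<Rightarrow> int"
  assumes b01: "\<And>x. 0 \<le> h x \<and> h x \<le> 1" and mono: "\<And>x. h (x-1) \<le> h x"
    and x0: "h x0 = 0" and x1: "h x1 = 1"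
  shows "\<exists>!x. h x - h (x-1) = 1"
proof -
  have monoG: "h x \<le> h (x + int n)" for x n
  proof (induction n)
    case 0 then show ?case by simp
  next
    case (Suc n)
    have "h (x + int n) \<le> h (x + int (Suc n))" using mono[of "x + int (Suc n)"] by simp
    then show ?case using Suc by simp
  qed
  have ex: "\<And>x. h x = 0 \<Longrightarrow> h (x + int n) = 1 \<Longrightarrow> \<exists>y. h y - h (y-1) = 1" for n
  proof (induction n)
    case 0 then show ?case by simp
  next
    case (Suc n)
    show ?case
    proof (cases "h (x+1) = 1")
      case True then show ?thesis using Suc.prems by (intro exI[of _ "x+1"]) simp
    next
      case False
      then have "h (x+1) = 0" using b01[of "x+1"] by simp
      moreover have "h (x + 1 + int n) = 1" using Suc.prems by (simp add: add.assoc)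
      ultimately show ?thesis using Suc.IH by blast
    qed
  qed
  have "x0 < x1"
  proof (rule ccontr)
    assume "\<not> x0 < x1"
    then have "h x1 \<le> h (x1 + int (nat (x0 - x1)))" using monoG by blast
    then show False using x0 x1 \<open>\<not> x0 < x1\<close> by simp
  qed
  then have "h (x0 + int (nat (x1 - x0))) = 1" using x1 by simp
  then obtain y where y: "h y - h (y-1) = 1" using ex[OF x0] by blast
  show ?thesis
  proof (rule ex1I[of _ y])
    show "h y - h (y-1) = 1" by (rule y)
  next
    fix y' assume y': "h y' - h (y'-1) = 1"
    have J: "h z = 1 \<and> h (z-1) = 0" if "h z - h (z-1) = 1" for z
      using that b01[of z] b01[of "z-1"] by auto
    show "y' = y"
    proof (rule ccontr)
      assume "y' \<noteq> y"
      then consider "y < y'" | "y' < y" by linarith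
      then show False
      proof cases
        case 1
        have "h y \<le> h (y + int (nat (y' - 1 - y)))" using monoG by blast
        then show False using J[OF y] J[OF y'] 1 by simp
      next
        case 2
        have "h y' \<le> h (y' + int (nat (y - 1 - y')))" using monoG by blast
        then show False using J[OF y] J[OF y'] 2 by simp
      qed
    qed
  qed
qed

locale tm = dg V m for V :: "'v set" and m +
  fixes u v :: 'v and K :: nat and C0 :: int and D :: "'v \<Rightarrow> int"
  assumes uV: "u \<in> V" and vV: "v \<in> V" and uv: "u \<noteq> v" and Kpos: "1 \<le> K"
    and Ktor: "lin_equiv V m (\<lambda>x. int K * ind u x) (\<lambda>x. int K * ind v x)"
    and bigdeg: "\<And>E. C0 \<le> degree V E \<Longrightarrow> \<exists>F. effective V F \<and> lin_equiv V m E F"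
    and subm: "submodular V m u v D"
begin

definition fr :: "int \<Rightarrow> int \<Rightarrow> int" where "fr a b = rank V m (twist u v D a (-b))"

definition Dl :: "int \<Rightarrow> int \<Rightarrow> int" where "Dl a b = Delta V m u v (twist u v D a (-b))"

lemma Dl_fr: "Dl a b = fr a b - fr (a-1) b - fr a (b+1) + fr (a-1) (b+1)"
proof -
  have 1: "twist u v (twist u v D a (-b)) (-1) 0 = twist u v D (a-1) (-b)"
    by (simp add: twist_def fun_eq_iff algebra_simps)
  have 2: "twist u v (twist u v D a (-b)) 0 (-1) = twist u v D a (-(b+1))"
    by (simp add: twist_def fun_eq_iff algebra_simps)
  have 3: "twist u v (twist u v D a (-b)) (-1) (-1) = twist u v D (a-1) (-(b+1))"
    by (simp add: twist_def fun_eq_iff algebra_simps)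
  show ?thesis unfolding Dl_def Delta_def fr_def 1 2 3 by simp
qed

lemma Dl_nonneg: "0 \<le> Dl a b"
  using subm unfolding submodular_def Dl_def by blast

lemma deg_tw: "degree V (twist u v D a (-b)) = degree V D + a - b"
  unfolding twist_def degree_def using finV uV vV
  by (simp add: sum.distrib sum_subtractf sum_ind_c)

lemma fr_neg: "degree V D + a - b < 0 \<Longrightarrow> fr a b = -1"
  unfolding fr_def by (rule rank_neg) (simp add: deg_tw)

lemma fr_low: "degree V D + a - b - C0 \<le> fr a b"
proof -
  have "degree V (twist u v D a (-b)) - C0 \<le> fr a b" unfolding fr_def by (rule rank_lower) (rule bigdeg)
  then show ?thesis using deg_tw by simp
qed

lemma fr_u: "fr a b - 1 \<le> fr (a-1) b \<and> fr (a-1) b \<le> fr a b"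
proof -
  have e: "twist u v D (a-1) (-b) = (\<lambda>x. twist u v D a (-b) x - ind u x)"
    by (simp add: twist_def fun_eq_iff algebra_simps)
  show ?thesis unfolding fr_def e using rank_minus_le[OF uV] rank_minus_ge[OF uV] by blast
qed

lemma fr_v: "fr a b - 1 \<le> fr a (b+1) \<and> fr a (b+1) \<le> fr a b"
proof -
  have e: "twist u v D a (-(b+1)) = (\<lambda>x. twist u v D a (-b) x - ind v x)"
    by (simp add: twist_def fun_eq_iff algebra_simps)
  show ?thesis unfolding fr_def e using rank_minus_le[OF vV] rank_minus_ge[OF vV] by blast
qed

lemma fr_per: "a' = a + int K \<Longrightarrow> b' = b + int K \<Longrightarrow> fr a' b' = fr a b"
proof -
  assume a: "a' = a + int K" and b: "b' = b + int K"
  have P: "prin V m (\<lambda>x. int K * ind u x - int K * ind v x)" using Ktor unfolding lin_equiv_prin .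
  have "lin_equiv V m (twist u v D a' (-b')) (twist u v D a (-b))"
    unfolding lin_equiv_prin by (rule prin_cong[OF P]) (simp add: twist_def a b algebra_simps)
  then show ?thesis unfolding fr_def by (rule rank_equiv)
qed

lemma row_exists: "\<exists>a. fr a b - fr a (b+1) = 1"
proof (rule ccontr)
  assume H: "\<not> (\<exists>a. fr a b - fr a (b+1) = 1)"
  have z: "fr a b = fr a (b+1)" for a proof -
    have "fr a b - fr a (b+1) \<noteq> 1" using H by blast
    then show ?thesis using fr_v[of a b] by linarith
  qed
  have drop: "fr a c - fr a (c + int n) \<le> int n" for a c n
  proof (induction n)
    case 0 then show ?case by simp
  next
    case (Suc n)
    have e: "c + int (Suc n) = c + int n + 1" by simp
    show ?case unfolding e using Suc fr_v[of a "c + int n"] by linarith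
  qed
  have step: "fr a b \<le> fr (a - int K) b + (int K - 1)" for a
  proof -
    have "fr a (b+1) - fr a (b + 1 + int (K-1)) \<le> int (K-1)" by (rule drop)
    moreover have "b + 1 + int (K-1) = b + int K" using Kpos by simp
    moreover have "fr a (b + int K) = fr (a - int K) b" by (rule fr_per) auto
    ultimately show ?thesis using z[of a] Kpos by simp
  qed
  have iter: "fr (int t * int K) b \<le> fr 0 b + int t * (int K - 1)" for t
  proof (induction t)
    case 0 then show ?case by simp
  next
    case (Suc t)
    have "fr (int (Suc t) * int K) b \<le> fr (int (Suc t) * int K - int K) b + (int K - 1)" by (rule step)
    moreover have "int (Suc t) * int K - int K = int t * int K" by (simp add: algebra_simps)
    ultimately show ?case using Suc by (simp add: algebra_simps)
  qed
  define t where "t = nat (fr 0 b - degree V D + b + C0) + 1"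
  have "degree V D + int t * int K - b - C0 \<le> fr (int t * int K) b" by (rule fr_low)
  moreover have "int t * (int K - 1) = int t * int K - int t" by (simp add: algebra_simps)
  ultimately have "int t \<le> fr 0 b - degree V D + b + C0" using iter[of t] by linarith
  then show False unfolding t_def by linarith
qed

lemma col_exists: "\<exists>b. fr a b - fr (a-1) b = 1"
proof (rule ccontr)
  assume H: "\<not> (\<exists>b. fr a b - fr (a-1) b = 1)"
  have z: "fr a b = fr (a-1) b" for b proof -
    have "fr a b - fr (a-1) b \<noteq> 1" using H by blast
    then show ?thesis using fr_u[of a b] by linarith
  qed
  have drop: "fr c b - fr (c - int n) b \<le> int n" for c b n
  proof (induction n)
    case 0 then show ?case by simp
  next
    case (Suc n)
    have e: "c - int (Suc n) = c - int n - 1" by simp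
    show ?case unfolding e using Suc fr_u[of "c - int n" b] by linarith
  qed
  have step: "fr a b \<le> fr a (b + int K) + (int K - 1)" for b
  proof -
    have "fr (a-1) b - fr (a - 1 - int (K-1)) b \<le> int (K-1)" by (rule drop)
    moreover have "a - 1 - int (K-1) = a - int K" using Kpos by simp
    moreover have "fr a (b + int K) = fr (a - int K) b" by (rule fr_per) auto
    ultimately show ?thesis using z[of b] Kpos by simp
  qed
  have iter: "fr a (- (int t * int K)) \<le> fr a 0 + int t * (int K - 1)" for t
  proof (induction t)
    case 0 then show ?case by simp
  next
    case (Suc t)
    have "fr a (- (int (Suc t) * int K)) \<le> fr a (- (int (Suc t) * int K) + int K) + (int K - 1)" by (rule step)
    moreover have "- (int (Suc t) * int K) + int K = - (int t * int K)" by (simp add: algebra_simps)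
    ultimately show ?case using Suc by (simp add: algebra_simps)
  qed
  define t where "t = nat (fr a 0 - degree V D - a + C0) + 1"
  have "degree V D + a - (- (int t * int K)) - C0 \<le> fr a (- (int t * int K))" by (rule fr_low)
  moreover have "int t * (int K - 1) = int t * int K - int t" by (simp add: algebra_simps)
  ultimately have "int t \<le> fr a 0 - degree V D - a + C0" using iter[of t] by linarith
  then show False unfolding t_def by linarith
qed

lemma row_unique: "\<exists>!a. Dl a b = 1"
proof -
  define h where "h a = fr a b - fr a (b+1)" for a
  have Dh: "Dl a b = h a - h (a-1)" for a unfolding h_def Dl_fr by simp
  have "\<exists>!a. h a - h (a-1) = 1"
  proof (rule jump_unique)
    show "0 \<le> h x \<and> h x \<le> 1" for x unfolding h_def using fr_v[of x b] by simp
    show "h (x-1) \<le> h x" for x using Dl_nonneg[of x b] Dh[of x] by simp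
    show "h (b - degree V D - 1) = 0" unfolding h_def by (simp add: fr_neg)
    show "h (SOME a. h a = 1) = 1" using row_exists unfolding h_def by (rule someI_ex)
  qed
  then show ?thesis using Dh by simp
qed

lemma Dl_01: "Dl a b = 0 \<or> Dl a b = 1"
proof -
  have "Dl a b \<le> 1" unfolding Dl_fr using fr_v[of a b] fr_v[of "a-1" b] by linarith
  then show ?thesis using Dl_nonneg[of a b] by linarith
qed

lemma col_unique: "\<exists>!b. Dl a b = 1"
proof -
  define h where "h x = fr a (-x) - fr (a-1) (-x)" for x
  have Dh: "Dl a (-x) = h x - h (x-1)" for x unfolding h_def Dl_fr by (simp add: algebra_simps)
  obtain b0 where b0: "fr a b0 - fr (a-1) b0 = 1" using col_exists by blast
  have "\<exists>!x. h x - h (x-1) = 1"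
  proof (rule jump_unique)
    show "0 \<le> h x \<and> h x \<le> 1" for x unfolding h_def using fr_u[of a "-x"] by simp
    show "h (x-1) \<le> h x" for x using Dl_nonneg[of a "-x"] Dh[of x] by simp
    show "h (- (degree V D + a + 1)) = 0" unfolding h_def by (simp add: fr_neg)
    show "h (-b0) = 1" unfolding h_def using b0 by simp
  qed
  then obtain x where x: "h x - h (x-1) = 1" and xu: "\<And>y. h y - h (y-1) = 1 \<Longrightarrow> y = x" by blast
  show ?thesis
  proof (rule ex1I[of _ "-x"])
    show "Dl a (-x) = 1" using x Dh by simp
  next
    fix b assume "Dl a b = 1"
    then have "h (-b) - h (-b-1) = 1" using Dh[of "-b"] by simp
    then show "b = -x" using xu by fastforce
  qed
qed

definition tau :: "int \<Rightarrow> int" where "tau b = (THE a. Dl a b = 1)"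

lemma tau_1: "Dl (tau b) b = 1"
  unfolding tau_def using row_unique by (rule theI')

lemma tau_eq: "Dl a b = 1 \<Longrightarrow> tau b = a"
  using row_unique tau_1 by blast

lemma tau_prop: "Dl a b = (if tau b = a then 1 else 0)"
proof (cases "tau b = a")
  case True then show ?thesis using tau_1 by auto
next
  case False
  then have "Dl a b \<noteq> 1" using tau_eq by blast
  then show ?thesis using False Dl_01[of a b] by simp
qed

lemma tau_bij: "bij tau"
proof (rule bijI)
  show "inj tau"
  proof (rule injI)
    fix b b' assume "tau b = tau b'"
    then have "Dl (tau b) b = 1" "Dl (tau b) b' = 1" using tau_1[of b] tau_1[of b'] by simp_all
    then show "b = b'" using col_unique by blast
  qed
  show "surj tau" unfolding surj_def
  proof
    fix a
    obtain b where "Dl a b = 1" using col_unique by blast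
    then have "tau b = a" by (rule tau_eq)
    then show "\<exists>b. a = tau b" by auto
  qed
qed

lemma trans_perm_tau: "trans_perm V m u v D = tau"
  unfolding trans_perm_def
proof (rule the_equality)
  show "bij tau \<and> (\<forall>a b. Delta V m u v (twist u v D a (-b)) = (if tau b = a then 1 else 0))"
    using tau_bij tau_prop unfolding Dl_def by blast
next
  fix t assume "bij t \<and> (\<forall>a b. Delta V m u v (twist u v D a (-b)) = (if t b = a then 1 else 0))"
  then have "Dl (t b) b = 1" for b unfolding Dl_def by simp
  then have "tau b = t b" for b using tau_eq by blast
  then show "t = tau" by (simp add: fun_eq_iff)
qed

lemma Dl_per: "Dl (a + int K) (b + int K) = Dl a b"
proof -
  have 1: "fr (a + int K) (b + int K) = fr a b" by (rule fr_per) auto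
  have 2: "fr (a + int K - 1) (b + int K) = fr (a-1) b" by (rule fr_per) auto
  have 3: "fr (a + int K) (b + int K + 1) = fr a (b+1)" by (rule fr_per) auto
  have 4: "fr (a + int K - 1) (b + int K + 1) = fr (a-1) (b+1)" by (rule fr_per) auto
  show ?thesis unfolding Dl_fr 1 2 3 4 ..
qed

lemma tau_per: "tau (b + int K) = tau b + int K"
proof -
  have "Dl (tau b + int K) (b + int K) = 1" using Dl_per tau_1 by simp
  then show ?thesis by (rule tau_eq)
qed

end


lemma walk_up: fixes i j :: nat shows "P i \<Longrightarrow> \<not> P j \<Longrightarrow> i \<le> j \<Longrightarrow> \<exists>k. i \<le> k \<and> k < j \<and> P k \<and> \<not> P (Suc k)"
proof (induction j)
  case 0 then show ?case by simp
next
  case (Suc j)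
  show ?case
  proof (cases "P j")
    case True
    have "i \<le> j" using Suc.prems True by (metis le_SucE)
    then show ?thesis using True Suc.prems by blast
  next
    case False
    have "i \<le> j" using Suc.prems False by (metis le_SucE)
    then show ?thesis using Suc.IH Suc.prems False by force
  qed
qed

lemma walk_down: fixes i :: nat shows "P i \<Longrightarrow> \<not> P 0 \<Longrightarrow> \<exists>k. 0 < k \<and> k \<le> i \<and> P k \<and> \<not> P (k - 1)"
proof (induction i)
  case 0 then show ?case by simp
next
  case (Suc i)
  show ?case
  proof (cases "P i")
    case True then show ?thesis using Suc by (meson le_SucI)
  next
    case False then show ?thesis using Suc.prems by (intro exI[of _ "Suc i"]) simp
  qed
qed

lemma prin_scale: "prin V m h \<Longrightarrow> prin V m (\<lambda>x. c * h x)"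
  using prin_lin[of V m h h c 0] by simp

lemma card_filter_int: "finite A \<Longrightarrow> int (card {b\<in>A. P b}) = (\<Sum>b\<in>A. if P b then 1 else 0)"
  by (simp add: sum.inter_filter[symmetric])

lemma sum_card_fibers:
  assumes "finite A" "finite W" "\<And>b. b \<in> A \<Longrightarrow> nb b \<in> W"
  shows "(\<Sum>y\<in>W. int (card {b\<in>A. nb b = y})) = int (card A)"
proof -
  have "(\<Sum>y\<in>W. int (card {b\<in>A. nb b = y})) = (\<Sum>y\<in>W. \<Sum>b\<in>A. if nb b = y then 1 else 0)"
    using assms(1) by (simp add: card_filter_int)
  also have "\<dots> = (\<Sum>b\<in>A. \<Sum>y\<in>W. if nb b = y then 1 else 0)" by (rule sum.swap)
  also have "\<dots> = (\<Sum>b\<in>A. 1)" using assms(2,3) by (simp add: sum.delta)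
  finally show ?thesis by simp
qed

context dg begin

lemma lap_ind:
  assumes "w \<in> V" "x \<in> V"
  shows "lap V m (ind w) x = (if x = w then (\<Sum>y\<in>V. int (m w y)) else 0) - int (m x w)"
proof -
  have "lap V m (ind w) x = (\<Sum>y\<in>V. int (m x y) * ind w x) - (\<Sum>y\<in>V. int (m x y) * ind w y)"
    unfolding lap_def by (simp add: sum_subtractf right_diff_distrib)
  also have "(\<Sum>y\<in>V. int (m x y) * ind w y) = int (m x w)"
    using finV assms by (simp add: ind_def sum.delta' if_distrib cong: if_cong)
  finally have L: "lap V m (ind w) x = (\<Sum>y\<in>V. int (m x y) * ind w x) - int (m x w)" .
  have i1: "ind w w = 1" and i0: "x \<noteq> w \<Longrightarrow> ind w x = 0" by (simp_all add: ind_def)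
  show ?thesis using L by (cases "x = w") (simp_all add: i1 i0)
qed

lemma prin_fire:
  assumes "w \<in> V"
  shows "prin V m (\<lambda>x. (if x = w then (\<Sum>y\<in>V. int (m w y)) else 0) - int (m x w))"
  by (rule prin_cong[OF prin_lap[of V m "ind w"]]) (simp add: lap_ind assms)

lemma bigdeg_lemma:
  assumes N: "0 < N" and u: "u \<in> V"
    and H: "\<And>x. x \<in> V \<Longrightarrow> prin V m (\<lambda>y. N * (ind x y - ind u y))"
    and deg: "int (card V) * N \<le> degree V E"
  shows "\<exists>F. effective V F \<and> lin_equiv V m E F"
proof -
  define R where "R = (\<Sum>x\<in>V. E x mod N)"
  define F where "F y = E y mod N + (if y = u then degree V E - R else 0)" for y
  have R: "R \<le> int (card V) * N"
  proof -
    have "R \<le> (\<Sum>x\<in>V. N)" unfolding R_def by (rule sum_mono) (use pos_mod_bound[OF N] in \<open>simp add: less_imp_le\<close>)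
    then show ?thesis by simp
  qed
  have "effective V F" unfolding effective_def
  proof
    fix y assume "y \<in> V"
    have "0 \<le> E y mod N" using N by simp
    moreover have "0 \<le> degree V E - R" using R deg by linarith
    ultimately show "0 \<le> F y" unfolding F_def by simp
  qed
  moreover have "lin_equiv V m E F" unfolding lin_equiv_prin
  proof -
    have P: "prin V m (\<lambda>y. \<Sum>x\<in>V. (E x div N) * (N * (ind x y - ind u y)))"
      by (rule prin_sum[OF finV]) (rule prin_scale[OF H])
    show "prin V m (\<lambda>x. E x - F x)"
    proof (rule prin_cong[OF P])
      fix y assume y: "y \<in> V"
      have s1: "(\<Sum>x\<in>V. (E x div N) * (N * (ind x y - ind u y)))
          = N * (\<Sum>x\<in>V. (E x div N) * ind x y) - N * (\<Sum>x\<in>V. E x div N) * ind u y"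
      proof -
        have "(\<Sum>x\<in>V. (E x div N) * (N * (ind x y - ind u y)))
            = (\<Sum>x\<in>V. N * ((E x div N) * ind x y) - (N * ind u y) * (E x div N))"
          by (rule sum.cong) (simp_all add: right_diff_distrib)
        also have "\<dots> = N * (\<Sum>x\<in>V. (E x div N) * ind x y) - (N * ind u y) * (\<Sum>x\<in>V. E x div N)"
          by (simp only: sum_subtractf sum_distrib_left)
        finally show ?thesis by simp
      qed
      have s2: "(\<Sum>x\<in>V. (E x div N) * ind x y) = E y div N" using sum_c_ind[OF finV y] .
      have s3: "degree V E - R = N * (\<Sum>x\<in>V. E x div N)"
      proof -
        have "degree V E = (\<Sum>x\<in>V. N * (E x div N)) + R" unfolding degree_def R_def sum.distrib[symmetric]
          by (simp add: mult_div_mod_eq)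
        then show ?thesis by (simp add: sum_distrib_left)
      qed
      have s5: "N * (E z div N) = E z - E z mod N" for z by (simp add: minus_mod_eq_mult_div)
      show "(\<Sum>x\<in>V. (E x div N) * (N * (ind x y - ind u y))) = E y - F y"
        unfolding s1 s2 F_def s3 by (simp add: ind_def s5)
    qed
  qed
  ultimately show ?thesis by blast
qed

lemma hyp_lower:
  assumes u: "u \<in> V" and v: "v \<in> V"
    and H: "\<And>x. x \<in> V \<Longrightarrow> \<exists>x'\<in>V. prin V m (\<lambda>y. ind u y + ind v y - ind x y - ind x' y)"
  shows "int c \<le> rank V m (\<lambda>y. int c * (ind u y + ind v y))"
proof -
  have "\<forall>x\<in>V. \<exists>x'. x' \<in> V \<and> prin V m (\<lambda>y. ind u y + ind v y - ind x y - ind x' y)"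
    using H by blast
  from bchoice[OF this] obtain s where s: "\<forall>x\<in>V. s x \<in> V \<and> prin V m (\<lambda>y. ind u y + ind v y - ind x y - ind (s x) y)"
    by blast
  have "ok V m (\<lambda>y. int c * (ind u y + ind v y)) c" unfolding ok_def
  proof (intro allI impI)
    fix E assume E: "effective V E \<and> degree V E = int c"
    define F where "F y = (\<Sum>x\<in>V. E x * ind (s x) y)" for y
    have "effective V F" unfolding effective_def F_def
    proof
      fix y assume "y \<in> V"
      show "0 \<le> (\<Sum>x\<in>V. E x * ind (s x) y)"
      proof (rule sum_nonneg)
        fix x assume "x \<in> V"
        then have "0 \<le> E x" using E unfolding effective_def by blast
        moreover have "0 \<le> ind (s x) y" by (simp add: ind_def)
        ultimately show "0 \<le> E x * ind (s x) y" by simp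
      qed
    qed
    moreover have "lin_equiv V m (\<lambda>y. int c * (ind u y + ind v y) - E y) F" unfolding lin_equiv_prin
    proof -
      have P: "prin V m (\<lambda>y. \<Sum>x\<in>V. E x * (ind u y + ind v y - ind x y - ind (s x) y))"
      proof (rule prin_sum[OF finV])
        fix x assume "x \<in> V"
        then have "prin V m (\<lambda>y. ind u y + ind v y - ind x y - ind (s x) y)" using s by blast
        then show "prin V m (\<lambda>y. E x * (ind u y + ind v y - ind x y - ind (s x) y))" by (rule prin_scale)
      qed
      show "prin V m (\<lambda>y. int c * (ind u y + ind v y) - E y - F y)"
      proof (rule prin_cong[OF P])
        fix y assume y: "y \<in> V"
        have "(\<Sum>x\<in>V. E x * (ind u y + ind v y - ind x y - ind (s x) y))
          = (\<Sum>x\<in>V. E x * (ind u y + ind v y) - E x * ind x y - E x * ind (s x) y)"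
          by (rule sum.cong) (simp_all add: right_diff_distrib)
        also have "\<dots> = (\<Sum>x\<in>V. E x) * (ind u y + ind v y) - (\<Sum>x\<in>V. E x * ind x y) - F y"
          unfolding F_def by (simp only: sum_subtractf sum_distrib_right)
        also have "(\<Sum>x\<in>V. E x * ind x y) = E y" using sum_c_ind[OF finV y] .
        also have "(\<Sum>x\<in>V. E x) = int c" using E unfolding degree_def by simp
        finally show "(\<Sum>x\<in>V. E x * (ind u y + ind v y - ind x y - ind (s x) y)) = int c * (ind u y + ind v y) - E y - F y" .
      qed
    qed
    ultimately show "\<exists>F. effective V F \<and> lin_equiv V m (\<lambda>x. int c * (ind u x + ind v x) - E x) F" by blast
  qed
  then show ?thesis using rank_ge_iff by blast
qed

end

locale ban =
  fixes g :: nat and ns :: "nat \<Rightarrow> nat"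
  assumes npos: "\<And>\<alpha>. \<alpha> \<le> g \<Longrightarrow> 0 < ns \<alpha>"
begin

abbreviation "vt \<equiv> banana_vert ns"
abbreviation "BV \<equiv> banana_V g ns"
abbreviation "Bm \<equiv> banana_m g ns"

lemma n0: "0 < ns 0" using npos by simp

lemma vt0[simp]: "vt a 0 = (0,0)" by (simp add: banana_vert_def)

lemma vtn: "a \<le> g \<Longrightarrow> vt a (ns a) = (0, ns 0)"
  using npos[of a] by (simp add: banana_vert_def)

lemma vt_u: "i \<le> ns a \<Longrightarrow> a \<le> g \<Longrightarrow> vt a i = (0,0) \<longleftrightarrow> i = 0"
  unfolding banana_vert_def using npos[of a] n0 by auto

lemma vt_v: "i \<le> ns a \<Longrightarrow> a \<le> g \<Longrightarrow> vt a i = (0, ns 0) \<longleftrightarrow> i = ns a"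
  unfolding banana_vert_def using npos[of a] n0 by auto

lemma vt_int: "0 < i \<Longrightarrow> i < ns a \<Longrightarrow> j \<le> ns b \<Longrightarrow> vt b j = vt a i \<longleftrightarrow> (b = a \<and> j = i)"
  unfolding banana_vert_def by auto

lemma vt_inV: "a \<le> g \<Longrightarrow> i \<le> ns a \<Longrightarrow> vt a i \<in> BV"
  unfolding banana_V_def by blast

lemma BV_cases: "x \<in> BV \<Longrightarrow> \<exists>a i. a \<le> g \<and> i \<le> ns a \<and> x = vt a i"
  unfolding banana_V_def by blast

lemma uV: "(0,0) \<in> BV" using vt_inV[of 0 0] by simp
lemma vV: "(0, ns 0) \<in> BV" using vt_inV[of 0 "ns 0"] vtn[of 0] by simp
lemma uv: "(0::nat, 0::nat) \<noteq> (0, ns 0)" using n0 by simp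

lemma finBV: "finite BV"
proof -
  have "BV \<subseteq> (\<lambda>(a,i). vt a i) ` (SIGMA a:{..g}. {..ns a})"
    unfolding banana_V_def by auto
  then show ?thesis by (rule finite_surj[rotated]) auto
qed

lemma vt_ne_suc: "a \<le> g \<Longrightarrow> i < ns a \<Longrightarrow> vt a i \<noteq> vt a (Suc i)"
  unfolding banana_vert_def using n0 by auto

lemma Bm_sym: "Bm x y = Bm y x"
  unfolding banana_m_def by (simp add: insert_commute)

lemma fin_edges: "finite {(a, i). a \<le> g \<and> i < ns a \<and> Q a i}"
proof -
  have "{(a, i). a \<le> g \<and> i < ns a \<and> Q a i} \<subseteq> (SIGMA a:{..g}. {..<ns a})" by auto
  moreover have "finite (SIGMA a:{..g}. {..<ns a})" by (rule finite_SigmaI) auto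
  ultimately show ?thesis by (rule finite_subset)
qed

lemma Bm_loop: "Bm x x = 0"
proof -
  have "{(a, i). a \<le> g \<and> i < ns a \<and> {vt a i, vt a (Suc i)} = {x, x}} = {}"
  proof (rule ccontr)
    assume "{(a, i). a \<le> g \<and> i < ns a \<and> {vt a i, vt a (Suc i)} = {x, x}} \<noteq> {}"
    then obtain a i where "a \<le> g" "i < ns a" "{vt a i, vt a (Suc i)} = {x, x}" by blast
    moreover from this(3) have "vt a i = x" "vt a (Suc i) = x" by (auto simp: doubleton_eq_iff)
    ultimately show False using vt_ne_suc[of a i] by simp
  qed
  then show ?thesis unfolding banana_m_def by (simp only: card.empty)
qed

lemma Bm_adj: "a \<le> g \<Longrightarrow> j < ns a \<Longrightarrow> 1 \<le> Bm (vt a j) (vt a (Suc j))"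
proof -
  assume a: "a \<le> g" "j < ns a"
  have "(a, j) \<in> {(a', i). a' \<le> g \<and> i < ns a' \<and> {vt a' i, vt a' (Suc i)} = {vt a j, vt a (Suc j)}}"
    using a by simp
  then have "card {(a', i). a' \<le> g \<and> i < ns a' \<and> {vt a' i, vt a' (Suc i)} = {vt a j, vt a (Suc j)}} \<noteq> 0"
    using fin_edges[of "\<lambda>a' i. {vt a' i, vt a' (Suc i)} = {vt a j, vt a (Suc j)}"] by (simp only: card_0_eq) blast
  then show ?thesis unfolding banana_m_def by simp
qed

lemma Bm_u: "Bm (0,0) x = card {b\<in>{..g}. vt b 1 = x}"
proof -
  have "{(a, i). a \<le> g \<and> i < ns a \<and> {vt a i, vt a (Suc i)} = {(0,0), x}} = (\<lambda>b. (b, 0)) ` {b\<in>{..g}. vt b 1 = x}"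
  proof (rule set_eqI, rule iffI)
    fix p :: "nat \<times> nat" assume "p \<in> {(a, i). a \<le> g \<and> i < ns a \<and> {vt a i, vt a (Suc i)} = {(0,0), x}}"
    then obtain a i where p: "p = (a,i)" "a \<le> g" "i < ns a" "{vt a i, vt a (Suc i)} = {(0,0), x}" by blast
    have "vt a (Suc i) \<noteq> (0,0)" using vt_u[of "Suc i" a] p by simp
    then have "vt a i = (0,0) \<and> vt a (Suc i) = x" using p(4) by (auto simp: doubleton_eq_iff)
    then have "i = 0" "vt a 1 = x" using vt_u[of i a] p by auto
    then show "p \<in> (\<lambda>b. (b, 0)) ` {b\<in>{..g}. vt b 1 = x}" using p by auto
  next
    fix p :: "nat \<times> nat" assume "p \<in> (\<lambda>b. (b, 0)) ` {b\<in>{..g}. vt b 1 = x}"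
    then obtain b where "p = (b, 0)" "b \<le> g" "vt b 1 = x" by auto
    then show "p \<in> {(a, i). a \<le> g \<and> i < ns a \<and> {vt a i, vt a (Suc i)} = {(0,0), x}}"
      using npos[of b] by auto
  qed
  moreover have "inj_on (\<lambda>b::nat. (b, 0::nat)) A" for A by (auto intro: inj_onI)
  ultimately show ?thesis unfolding banana_m_def by (simp only: card_image)
qed

lemma Bm_v: "Bm (0, ns 0) x = card {b\<in>{..g}. vt b (ns b - 1) = x}"
proof -
  have "{(a, i). a \<le> g \<and> i < ns a \<and> {vt a i, vt a (Suc i)} = {(0, ns 0), x}} = (\<lambda>b. (b, ns b - 1)) ` {b\<in>{..g}. vt b (ns b - 1) = x}"
  proof (rule set_eqI, rule iffI)
    fix p :: "nat \<times> nat" assume "p \<in> {(a, i). a \<le> g \<and> i < ns a \<and> {vt a i, vt a (Suc i)} = {(0, ns 0), x}}"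
    then obtain a i where p: "p = (a,i)" "a \<le> g" "i < ns a" "{vt a i, vt a (Suc i)} = {(0, ns 0), x}" by blast
    have "vt a i \<noteq> (0, ns 0)" using vt_v[of i a] p by simp
    then have "vt a (Suc i) = (0, ns 0) \<and> vt a i = x" using p(4) by (auto simp: doubleton_eq_iff)
    then have "Suc i = ns a" "vt a i = x" using vt_v[of "Suc i" a] p by auto
    then have i1: "i = ns a - 1" by simp
    have i: "i = ns a - 1" "vt a (ns a - 1) = x" using i1 \<open>vt a i = x\<close> by simp_all
    show "p \<in> (\<lambda>b. (b, ns b - 1)) ` {b\<in>{..g}. vt b (ns b - 1) = x}"
      by (rule image_eqI[of _ _ a]) (use p i in auto)
  next
    fix p :: "nat \<times> nat" assume "p \<in> (\<lambda>b. (b, ns b - 1)) ` {b\<in>{..g}. vt b (ns b - 1) = x}"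
    then obtain b where b: "p = (b, ns b - 1)" "b \<le> g" "vt b (ns b - 1) = x" by auto
    then have "Suc (ns b - 1) = ns b" using npos[of b] by simp
    then show "p \<in> {(a, i). a \<le> g \<and> i < ns a \<and> {vt a i, vt a (Suc i)} = {(0, ns 0), x}}"
      using b npos[of b] vtn[of b] by auto
  qed
  moreover have "inj_on (\<lambda>b::nat. (b, ns b - 1)) A" for A by (auto intro: inj_onI)
  ultimately show ?thesis unfolding banana_m_def by (simp only: card_image)
qed

lemma Bm_int:
  assumes a: "a \<le> g" "0 < i" "i < ns a"
  shows "int (Bm (vt a i) x) = (if x = vt a (i-1) then 1 else 0) + (if x = vt a (Suc i) then 1 else 0)"
proof -
  let ?A = "{(b, j). b \<le> g \<and> j < ns b \<and> {vt b j, vt b (Suc j)} = {vt a i, x}}"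
  have A: "?A = {p. p = (a, i-1) \<and> x = vt a (i-1)} \<union> {p. p = (a, i) \<and> x = vt a (Suc i)}"
  proof (rule set_eqI, rule iffI)
    fix p :: "nat \<times> nat" assume "p \<in> ?A"
    then obtain b j where p: "p = (b,j)" "b \<le> g" "j < ns b" "{vt b j, vt b (Suc j)} = {vt a i, x}" by blast
    have ne: "vt b j \<noteq> vt b (Suc j)" using vt_ne_suc p by blast
    from p(4) have "(vt b j = vt a i \<and> vt b (Suc j) = x) \<or> (vt b (Suc j) = vt a i \<and> vt b j = x)"
      by (auto simp: doubleton_eq_iff)
    then show "p \<in> {p. p = (a, i-1) \<and> x = vt a (i-1)} \<union> {p. p = (a, i) \<and> x = vt a (Suc i)}"
    proof
      assume h: "vt b j = vt a i \<and> vt b (Suc j) = x"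
      then have "b = a \<and> j = i" using vt_int[of i a j b] a p by simp
      then show ?thesis using h p by simp
    next
      assume h: "vt b (Suc j) = vt a i \<and> vt b j = x"
      then have "b = a \<and> Suc j = i" using vt_int[of i a "Suc j" b] a p by simp
      then show ?thesis using h p by auto
    qed
  next
    fix p :: "nat \<times> nat" assume "p \<in> {p. p = (a, i-1) \<and> x = vt a (i-1)} \<union> {p. p = (a, i) \<and> x = vt a (Suc i)}"
    then show "p \<in> ?A" using a by (auto simp: insert_commute)
  qed
  have C: "card ?A = (if x = vt a (i-1) then 1 else 0) + (if x = vt a (Suc i) then 1 else 0)"
    unfolding A using a by (auto simp: card_insert_if)
  show ?thesis unfolding banana_m_def C by simp
qed

lemma val_u: "(\<Sum>y\<in>BV. int (Bm (0,0) y)) = int g + 1"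
  unfolding Bm_u using sum_card_fibers[of "{..g}" BV "\<lambda>b. vt b 1"] finBV vt_inV npos
  by (simp add: Suc_leI)

lemma val_v: "(\<Sum>y\<in>BV. int (Bm (0, ns 0) y)) = int g + 1"
  unfolding Bm_v using sum_card_fibers[of "{..g}" BV "\<lambda>b. vt b (ns b - 1)"] finBV vt_inV npos
  by simp

lemma val_int: "a \<le> g \<Longrightarrow> 0 < i \<Longrightarrow> i < ns a \<Longrightarrow> (\<Sum>y\<in>BV. int (Bm (vt a i) y)) = 2"
  using finBV vt_inV[of a "i-1"] vt_inV[of a "Suc i"] by (simp add: Bm_int sum.distrib sum.delta)

end

sublocale ban \<subseteq> dg "banana_V g ns" "banana_m g ns"
  by unfold_locales (use finBV uV Bm_sym in auto)

context ban begin

lemma F1: assumes a: "a \<le> g" "0 < i" "i < ns a"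
  shows "prin BV Bm (\<lambda>x. 2 * ind (vt a i) x - ind (vt a (i-1)) x - ind (vt a (Suc i)) x)"
proof (rule prin_cong[OF prin_fire[OF vt_inV[of a i]]])
  show "a \<le> g" "i \<le> ns a" using a by auto
  fix x assume "x \<in> BV"
  show "(if x = vt a i then (\<Sum>y\<in>BV. int (Bm (vt a i) y)) else 0) - int (Bm x (vt a i)) =
        2 * ind (vt a i) x - ind (vt a (i-1)) x - ind (vt a (Suc i)) x"
    using val_int[OF a] Bm_int[OF a, of x] Bm_sym[of x "vt a i"] by (simp add: ind_def)
qed

lemma F2: "prin BV Bm (\<lambda>x. (int g + 1) * ind (0,0) x - (\<Sum>b\<le>g. ind (vt b 1) x))"
proof (rule prin_cong[OF prin_fire[OF uV]])
  fix x assume "x \<in> BV"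
  have "int (Bm x (0,0)) = (\<Sum>b\<in>{..g}. if vt b 1 = x then 1 else 0)"
    unfolding Bm_sym[of x] Bm_u by (rule card_filter_int) simp
  also have "\<dots> = (\<Sum>b\<le>g. ind (vt b 1) x)" by (rule sum.cong) (auto simp: ind_def)
  finally have "int (Bm x (0,0)) = (\<Sum>b\<le>g. ind (vt b 1) x)" .
  then show "(if x = (0,0) then (\<Sum>y\<in>BV. int (Bm (0,0) y)) else 0) - int (Bm x (0,0)) =
        (int g + 1) * ind (0,0) x - (\<Sum>b\<le>g. ind (vt b 1) x)"
    using val_u by (simp add: ind_def)
qed

end


lemma prin_comb3:
  "prin V m h1 \<Longrightarrow> prin V m h2 \<Longrightarrow> prin V m h3 \<Longrightarrow>
   (\<And>x. x \<in> V \<Longrightarrow> k x = a1 * h1 x + a2 * h2 x + a3 * h3 x) \<Longrightarrow> prin V m k"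
proof -
  assume p: "prin V m h1" "prin V m h2" "prin V m h3" and k: "\<And>x. x \<in> V \<Longrightarrow> k x = a1 * h1 x + a2 * h2 x + a3 * h3 x"
  have "prin V m (\<lambda>x. a1 * h1 x + a2 * h2 x)" by (rule prin_lin[OF p(1,2)])
  from prin_lin[OF this p(3), of 1 a3] show ?thesis by (rule prin_cong) (simp add: k)
qed

context ban begin

abbreviation PRe :: "nat \<Rightarrow> nat \<Rightarrow> nat \<times> nat \<Rightarrow> int" where
  "PRe a i \<equiv> (\<lambda>x. ind (vt a i) x - ind (0,0) x - int i * (ind (vt a 1) x - ind (0,0) x))"

lemma pr2: "a \<le> g \<Longrightarrow> Suc i \<le> ns a \<Longrightarrow> prin BV Bm (PRe a i) \<and> prin BV Bm (PRe a (Suc i))"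
proof (induction i)
  case 0
  have "prin BV Bm (PRe a 0)" by (rule prin_cong[OF prin_zero]) simp
  moreover have "prin BV Bm (PRe a 1)" by (rule prin_cong[OF prin_zero]) simp
  ultimately show ?case by simp
next
  case (Suc i)
  then have IH: "prin BV Bm (PRe a i)" "prin BV Bm (PRe a (Suc i))" by auto
  have F: "prin BV Bm (\<lambda>x. 2 * ind (vt a (Suc i)) x - ind (vt a i) x - ind (vt a (Suc (Suc i))) x)"
    using F1[of a "Suc i"] Suc.prems by simp
  have "prin BV Bm (PRe a (Suc (Suc i)))"
    by (rule prin_comb3[OF IH(2) IH(1) F, of _ 2 "-1" "-1"]) (simp add: algebra_simps)
  then show ?case using IH by simp
qed

lemma PR: "a \<le> g \<Longrightarrow> i \<le> ns a \<Longrightarrow> prin BV Bm (PRe a i)"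
proof (cases i)
  case 0 then show ?thesis by (simp add: prin_cong[OF prin_zero])
next
  case (Suc j)
  assume "a \<le> g" "i \<le> ns a"
  then show ?thesis using pr2[of a j] Suc by simp
qed

lemma PRv: "a \<le> g \<Longrightarrow> prin BV Bm (\<lambda>x. ind (0, ns 0) x - ind (0,0) x - int (ns a) * (ind (vt a 1) x - ind (0,0) x))"
  using PR[of a "ns a"] vtn[of a] by simp

lemma G4: assumes x: "x \<in> BV"
  shows "\<exists>x'\<in>BV. prin BV Bm (\<lambda>y. ind (0,0) y + ind (0, ns 0) y - ind x y - ind x' y)"
proof -
  obtain a i where ai: "a \<le> g" "i \<le> ns a" "x = vt a i" using BV_cases[OF x] by blast
  have d: "int (ns a - i) = int (ns a) - int i" using ai by simp
  have "prin BV Bm (\<lambda>y. ind (0,0) y + ind (0, ns 0) y - ind x y - ind (vt a (ns a - i)) y)"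
    by (rule prin_comb3[OF PR[of a i] PR[of a "ns a - i"] PRv[of a], of _ "-1" "-1" 1])
       (use ai d in \<open>simp_all add: algebra_simps\<close>)
  moreover have "vt a (ns a - i) \<in> BV" using ai by (simp add: vt_inV)
  ultimately show ?thesis by blast
qed

definition LL :: nat where "LL = (\<Prod>b\<le>g. ns b)"
definition cc :: "nat \<Rightarrow> nat" where "cc b = LL div ns b"
definition Kt :: nat where "Kt = (\<Sum>b\<le>g. cc b)"

lemma LL_pos: "0 < LL" unfolding LL_def by (rule prod_pos) (simp add: npos)

lemma cc_mult: "b \<le> g \<Longrightarrow> int (cc b) * int (ns b) = int LL"
proof -
  assume b: "b \<le> g"
  have "ns b dvd LL" unfolding LL_def by (rule dvd_prodI) (use b in auto)
  then have "cc b * ns b = LL" unfolding cc_def by simp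
  then show ?thesis by (metis of_nat_mult)
qed

lemma Kt_pos: "1 \<le> Kt"
proof -
  have "ns 0 dvd LL" unfolding LL_def by (rule dvd_prodI) auto
  then have "ns 0 \<le> LL" using LL_pos by (rule dvd_imp_le)
  then have "1 \<le> cc 0" unfolding cc_def using n0 div_greater_zero_iff[of LL "ns 0"] by linarith
  also have "cc 0 \<le> Kt" unfolding Kt_def by (rule member_le_sum) auto
  finally show ?thesis .
qed

lemma tor_beta: "b \<le> g \<Longrightarrow> prin BV Bm (\<lambda>x. int LL * (ind (vt b 1) x - ind (0,0) x) - int (cc b) * (ind (0, ns 0) x - ind (0,0) x))"
proof -
  assume b: "b \<le> g"
  show ?thesis
  proof (rule prin_cong[OF prin_scale[OF PRv[OF b], of "- int (cc b)"]])
    fix x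
    have "int LL * (ind (vt b 1) x - ind (0,0) x) = int (cc b) * int (ns b) * (ind (vt b 1) x - ind (0,0) x)"
      using cc_mult[OF b] by simp
    then show "- int (cc b) * (ind (0, ns 0) x - ind (0,0) x - int (ns b) * (ind (vt b 1) x - ind (0,0) x)) =
        int LL * (ind (vt b 1) x - ind (0,0) x) - int (cc b) * (ind (0, ns 0) x - ind (0,0) x)"
      by (simp add: algebra_simps)
  qed
qed

lemma tor: "prin BV Bm (\<lambda>x. int Kt * (ind (0, ns 0) x - ind (0,0) x))"
proof -
  have S: "prin BV Bm (\<lambda>x. \<Sum>b\<in>{..g}. int LL * (ind (vt b 1) x - ind (0,0) x) - int (cc b) * (ind (0, ns 0) x - ind (0,0) x))"
  proof (rule prin_sum)
    fix b assume "b \<in> {..g}"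
    then show "prin BV Bm (\<lambda>x. int LL * (ind (vt b 1) x - ind (0,0) x) - int (cc b) * (ind (0, ns 0) x - ind (0,0) x))"
      using tor_beta[of b] by simp
  qed simp
  show ?thesis
  proof (rule prin_comb3[OF S F2 prin_zero, of _ "-1" "- int LL" 0])
    fix x
    have "(\<Sum>b\<in>{..g}. int LL * (ind (vt b 1) x - ind (0,0) x) - int (cc b) * (ind (0, ns 0) x - ind (0,0) x))
      = int LL * (\<Sum>b\<le>g. ind (vt b 1) x) - int LL * ((int g + 1) * ind (0,0) x) - int Kt * (ind (0, ns 0) x - ind (0,0) x)"
    proof -
      have "(\<Sum>b\<in>{..g}. int LL * (ind (vt b 1) x - ind (0,0) x) - int (cc b) * (ind (0, ns 0) x - ind (0,0) x))
        = (\<Sum>b\<in>{..g}. int LL * ind (vt b 1) x) - (\<Sum>b\<in>{..g}. int LL * ind (0,0) x) - (\<Sum>b\<in>{..g}. int (cc b) * (ind (0, ns 0) x - ind (0,0) x))"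
        by (simp add: sum_subtractf right_diff_distrib)
      also have "(\<Sum>b\<in>{..g}. int LL * ind (0,0) x) = int LL * ((int g + 1) * ind (0,0) x)" by simp
      also have "(\<Sum>b\<in>{..g}. int LL * ind (vt b 1) x) = int LL * (\<Sum>b\<le>g. ind (vt b 1) x)" by (simp add: sum_distrib_left)
      also have "(\<Sum>b\<in>{..g}. int (cc b) * (ind (0, ns 0) x - ind (0,0) x)) = int Kt * (ind (0, ns 0) x - ind (0,0) x)"
        unfolding Kt_def by (simp add: sum_distrib_right)
      finally show ?thesis .
    qed
    then show "int Kt * (ind (0, ns 0) x - ind (0,0) x) =
      - 1 * (\<Sum>b\<in>{..g}. int LL * (ind (vt b 1) x - ind (0,0) x) - int (cc b) * (ind (0, ns 0) x - ind (0,0) x))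
      + - int LL * ((int g + 1) * ind (0,0) x - (\<Sum>b\<le>g. ind (vt b 1) x)) + 0 * 0"
      by (simp add: algebra_simps)
  qed
qed

lemma Ktor: "lin_equiv BV Bm (\<lambda>x. int Kt * ind (0,0) x) (\<lambda>x. int Kt * ind (0, ns 0) x)"
  unfolding lin_equiv_prin by (rule prin_cong[OF prin_scale[OF tor, of "-1"]]) (simp add: algebra_simps)

lemma Npr: assumes x: "x \<in> BV" shows "prin BV Bm (\<lambda>y. int (LL * Kt) * (ind x y - ind (0,0) y))"
proof -
  obtain a i where ai: "a \<le> g" "i \<le> ns a" "x = vt a i" using BV_cases[OF x] by blast
  show ?thesis
    by (rule prin_comb3[OF PR[OF ai(1,2)] tor_beta[OF ai(1)] tor, of _ "int (LL * Kt)" "int i * int Kt" "int i * int (cc a)"])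
      (use ai in \<open>simp add: algebra_simps\<close>)
qed

lemma bigdeg: "int (card BV) * int (LL * Kt) \<le> degree BV E \<Longrightarrow> \<exists>F. effective BV F \<and> lin_equiv BV Bm E F"
  by (rule bigdeg_lemma[OF _ uV Npr]) (use LL_pos Kt_pos in auto)

lemma notEff:
  assumes pq: "(p = (0,0) \<and> q = (0, ns 0)) \<or> (p = (0, ns 0) \<and> q = (0,0))" and c: "c \<le> int g"
  shows "\<not> (\<exists>F. effective BV F \<and> lin_equiv BV Bm (\<lambda>x. c * ind p x - ind q x) F)"
proof (rule dhar)
  have pq_ne: "p \<noteq> q" using pq n0 by auto
  have pV: "p \<in> BV" and qV: "q \<in> BV" using pq uV vV by auto
  show "q \<in> BV" by (rule qV)
  show "c * ind p q - ind q q < 0" using pq_ne by (simp add: ind_def)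
  fix S assume S: "S \<subseteq> BV - {q}" "S \<noteq> {}"
  show "\<exists>x\<in>S. c * ind p x - ind q x < (\<Sum>y\<in>BV - S. int (Bm x y))"
  proof (cases "S \<subseteq> {p}")
    case True
    then have Sp: "S = {p}" using S by auto
    have val: "(\<Sum>y\<in>BV. int (Bm p y)) = int g + 1" using pq val_u val_v by auto
    have "(\<Sum>y\<in>BV - {p}. int (Bm p y)) = int g + 1"
      using sum_diff1[OF finBV, of "\<lambda>y. int (Bm p y)" p] pV val Bm_loop by simp
    then show ?thesis using Sp pq_ne c by (simp add: ind_def)
  next
    case False
    then obtain x0 where x0: "x0 \<in> S" "x0 \<noteq> p" by auto
    then have x0V: "x0 \<in> BV" "x0 \<noteq> q" using S by auto
    obtain a i where ai: "a \<le> g" "i \<le> ns a" "x0 = vt a i" using BV_cases[OF x0V(1)] by blast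
    have hub: "x0 \<noteq> (0,0)" "x0 \<noteq> (0, ns 0)" using x0 x0V pq by auto
    then have i: "0 < i" "i < ns a" using ai vt_u[of i a] vt_v[of i a] by (auto simp: le_less)
    have D0: "c * ind p (vt a k) - ind q (vt a k) = 0" if "0 < k" "k < ns a" for k
    proof -
      have "vt a k \<noteq> (0,0)" "vt a k \<noteq> (0, ns 0)" using vt_u[of k a] vt_v[of k a] that ai by auto
      then show ?thesis using pq by (auto simp: ind_def)
    qed
    have pos: "0 < (\<Sum>y\<in>BV - S. int (Bm (vt a k) y))" if "y0 \<in> BV - S" "1 \<le> Bm (vt a k) y0" for k y0
    proof -
      have "int (Bm (vt a k) y0) \<le> (\<Sum>y\<in>BV - S. int (Bm (vt a k) y))"
        by (rule member_le_sum) (use that finBV in auto)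
      then show ?thesis using that by linarith
    qed
    show ?thesis
    proof (cases "q = (0, ns 0)")
      case True
      have "\<not> vt a (ns a) \<in> S" using vtn[OF ai(1)] True S by auto
      then obtain k where k: "i \<le> k" "k < ns a" "vt a k \<in> S" "vt a (Suc k) \<notin> S"
        using walk_up[of "\<lambda>k. vt a k \<in> S" i "ns a"] x0 ai by blast
      have "vt a (Suc k) \<in> BV - S" using k ai vt_inV by auto
      moreover have "1 \<le> Bm (vt a k) (vt a (Suc k))" using Bm_adj ai k by blast
      ultimately have "0 < (\<Sum>y\<in>BV - S. int (Bm (vt a k) y))" by (rule pos)
      then show ?thesis using D0[of k] k i by force
    next
      case False
      then have qu: "q = (0,0)" using pq by auto
      have "\<not> vt a 0 \<in> S" using qu S by auto
      then obtain k where k: "0 < k" "k \<le> i" "vt a k \<in> S" "vt a (k - 1) \<notin> S"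
        using walk_down[of "\<lambda>k. vt a k \<in> S" i] x0 ai by blast
      have "vt a (k - 1) \<in> BV - S" using k ai i vt_inV by auto
      moreover have "1 \<le> Bm (vt a k) (vt a (k - 1))"
        using Bm_adj[of a "k - 1"] ai k i Bm_sym[of "vt a k"] by simp
      ultimately have "0 < (\<Sum>y\<in>BV - S. int (Bm (vt a k) y))" by (rule pos)
      then show ?thesis using D0[of k] k i by force
    qed
  qed
qed

lemma rank_up1:
  assumes "1 \<le> c" "c \<le> int g"
  shows "rank BV Bm (\<lambda>x. (c-1) * ind (0,0) x + c * ind (0, ns 0) x) < c"
proof (rule ccontr)
  assume "\<not> ?thesis"
  then have "int (nat c) \<le> rank BV Bm (\<lambda>x. (c-1) * ind (0,0) x + c * ind (0, ns 0) x)" using assms by simp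
  then have ok: "ok BV Bm (\<lambda>x. (c-1) * ind (0,0) x + c * ind (0, ns 0) x) (nat c)" using rank_ge_iff by blast
  have E: "effective BV (\<lambda>x. c * ind (0,0) x) \<and> degree BV (\<lambda>x. c * ind (0,0) x) = int (nat c)"
    using chip_eff[of c] chip_deg[OF uV, of c] assms by simp
  obtain F where F: "effective BV F" "lin_equiv BV Bm (\<lambda>x. (c-1) * ind (0,0) x + c * ind (0, ns 0) x - c * ind (0,0) x) F"
    using ok E unfolding ok_def by blast
  have "lin_equiv BV Bm (\<lambda>x. c * ind (0, ns 0) x - ind (0,0) x) F = lin_equiv BV Bm (\<lambda>x. (c-1) * ind (0,0) x + c * ind (0, ns 0) x - c * ind (0,0) x) F"
    by (rule lin_equiv_cong1) (simp add: algebra_simps)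
  then have "lin_equiv BV Bm (\<lambda>x. c * ind (0, ns 0) x - ind (0,0) x) F" using F(2) by simp
  then show False using notEff[of "(0, ns 0)" "(0,0)" c] assms F(1) by auto
qed

lemma rank_up2:
  assumes "1 \<le> c" "c \<le> int g"
  shows "rank BV Bm (\<lambda>x. c * ind (0,0) x + (c-1) * ind (0, ns 0) x) < c"
proof (rule ccontr)
  assume "\<not> ?thesis"
  then have "int (nat c) \<le> rank BV Bm (\<lambda>x. c * ind (0,0) x + (c-1) * ind (0, ns 0) x)" using assms by simp
  then have ok: "ok BV Bm (\<lambda>x. c * ind (0,0) x + (c-1) * ind (0, ns 0) x) (nat c)" using rank_ge_iff by blast
  have E: "effective BV (\<lambda>x. c * ind (0, ns 0) x) \<and> degree BV (\<lambda>x. c * ind (0, ns 0) x) = int (nat c)"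
    using chip_eff[of c] chip_deg[OF vV, of c] assms by simp
  obtain F where F: "effective BV F" "lin_equiv BV Bm (\<lambda>x. c * ind (0,0) x + (c-1) * ind (0, ns 0) x - c * ind (0, ns 0) x) F"
    using ok E unfolding ok_def by blast
  have "lin_equiv BV Bm (\<lambda>x. c * ind (0,0) x - ind (0, ns 0) x) F = lin_equiv BV Bm (\<lambda>x. c * ind (0,0) x + (c-1) * ind (0, ns 0) x - c * ind (0, ns 0) x) F"
    by (rule lin_equiv_cong1) (simp add: algebra_simps)
  then have "lin_equiv BV Bm (\<lambda>x. c * ind (0,0) x - ind (0, ns 0) x) F" using F(2) by simp
  then show False using notEff[of "(0,0)" "(0, ns 0)" c] assms F(1) by auto
qed

lemma rank_low: "int n \<le> rank BV Bm (\<lambda>y. int n * (ind (0,0) y + ind (0, ns 0) y))"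
  by (rule hyp_lower[OF uV vV G4])

end


lemma card_pairs: "card {(a::int, b::int). 0 \<le> a \<and> a < b \<and> b \<le> int n} = (n+1) choose 2"
proof (induction n)
  case 0
  have E: "{(a::int, b::int). 0 \<le> a \<and> a < b \<and> b \<le> int 0} = {}" by auto
  show ?case unfolding E by simp
next
  case (Suc n)
  let ?A = "{(a::int, b::int). 0 \<le> a \<and> a < b \<and> b \<le> int n}"
  let ?B = "(\<lambda>a. (a, int n + 1)) ` {0..int n}"
  have eq: "{(a::int, b::int). 0 \<le> a \<and> a < b \<and> b \<le> int (Suc n)} = ?A \<union> ?B"
  proof (rule set_eqI)
    fix p :: "int \<times> int"
    obtain a b where p: "p = (a,b)" by fastforce
    show "p \<in> {(a::int, b::int). 0 \<le> a \<and> a < b \<and> b \<le> int (Suc n)} \<longleftrightarrow> p \<in> ?A \<union> ?B"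
    proof
      assume "p \<in> {(a::int, b::int). 0 \<le> a \<and> a < b \<and> b \<le> int (Suc n)}"
      then have h: "0 \<le> a" "a < b" "b \<le> int n + 1" using p by auto
      show "p \<in> ?A \<union> ?B"
      proof (cases "b \<le> int n")
        case True then show ?thesis using h p by auto
      next
        case False
        then have "b = int n + 1" using h by simp
        then have "p \<in> ?B" using h p by (intro image_eqI[of _ _ a]) auto
        then show ?thesis by blast
      qed
    next
      assume "p \<in> ?A \<union> ?B"
      then show "p \<in> {(a::int, b::int). 0 \<le> a \<and> a < b \<and> b \<le> int (Suc n)}" by auto
    qed
  qed
  have fA: "finite ?A"
  proof -
    have "?A \<subseteq> {0..int n} \<times> {0..int n}" by auto
    then show ?thesis by (rule finite_subset) auto
  qed
  have dis: "?A \<inter> ?B = {}" by auto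
  have cB: "card ?B = Suc n"
  proof -
    have "inj_on (\<lambda>a. (a, int n + 1)) {0..int n}" by (auto intro: inj_onI)
    then have "card ?B = card {0..int n}" by (rule card_image)
    then show ?thesis by simp
  qed
  have "card {(a::int, b::int). 0 \<le> a \<and> a < b \<and> b \<le> int (Suc n)} = card ?A + card ?B"
    unfolding eq by (rule card_Un_disjoint[OF fA _ dis]) simp
  also have "\<dots> = ((n+1) choose 2) + Suc n" using Suc cB by simp
  also have "\<dots> = (Suc n + 1) choose 2"
  proof -
    have "(Suc n + 1) choose 2 = (Suc n choose 1) + (Suc n choose 2)"
      unfolding numeral_2_eq_2 by (simp add: binomial_Suc_Suc)
    then show ?thesis by simp
  qed
  finally show ?case .
qed

lemma inv_bound:
  fixes t :: "int \<Rightarrow> int" and k g :: nat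
  assumes per: "\<And>b. t (b + int k) = t b + int k"
    and val: "\<And>b. 0 \<le> b \<Longrightarrow> b \<le> int g \<Longrightarrow> t b = int g - b" and gk: "g < k"
  shows "(g+1) choose 2 \<le> inv_k k t"
proof -
  define I where "I = inversions t"
  define R where "R = k_equiv k t"
  have kpos: "0 < k" using gk by simp
  have perN: "t (b + int j * int k) = t b + int j * int k" for b j
  proof (induction j)
    case 0 then show ?case by simp
  next
    case (Suc j)
    have "t (b + int (Suc j) * int k) = t ((b + int j * int k) + int k)" by (simp add: algebra_simps)
    also have "\<dots> = t (b + int j * int k) + int k" by (rule per)
    finally show ?case using Suc by (simp add: algebra_simps)
  qed
  have perZ: "t (b + q * int k) = t b + q * int k" for b q
  proof (cases "0 \<le> q")
    case True then show ?thesis using perN[of b "nat q"] by simp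
  next
    case False
    have "t ((b + q * int k) + int (nat (-q)) * int k) = t (b + q * int k) + int (nat (-q)) * int k" by (rule perN)
    moreover have "(b + q * int k) + int (nat (-q)) * int k = b" using False by (simp add: algebra_simps)
    ultimately show ?thesis using False by (simp add: algebra_simps)
  qed
  define M where "M = Max ((\<lambda>j. \<bar>t j - j\<bar>) ` {0..<int k})"
  have disp: "\<bar>t b - b\<bar> \<le> M" for b
  proof -
    have bb: "b = b mod int k + (b div int k) * int k" by simp
    have "t b = t (b mod int k + (b div int k) * int k)" using bb by simp
    also have "\<dots> = t (b mod int k) + (b div int k) * int k" by (rule perZ)
    finally have "t b - b = t (b mod int k) - b mod int k" using bb by linarith
    moreover have "b mod int k \<in> {0..<int k}" using kpos by simp
    ultimately show ?thesis unfolding M_def by (metis (no_types, lifting) Max_ge finite_atLeastLessThan_int finite_imageI image_eqI)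
  qed
  have eqv: "equiv I R"
    unfolding equiv_def refl_on_def sym_def trans_def R_def k_equiv_def I_def
  proof (intro conjI allI impI ballI)
    show "{((a, b), a', b'). (a, b) \<in> inversions t \<and> (a', b') \<in> inversions t \<and> a - a' = b - b' \<and> int k dvd a - a'}
      \<subseteq> inversions t \<times> inversions t" by auto
  next
    fix x assume "x \<in> inversions t" then show "(x, x) \<in> {((a, b), a', b'). (a, b) \<in> inversions t \<and> (a', b') \<in> inversions t \<and> a - a' = b - b' \<and> int k dvd a - a'}"
      by (cases x) auto
  next
    fix x y assume "(x, y) \<in> {((a, b), a', b'). (a, b) \<in> inversions t \<and> (a', b') \<in> inversions t \<and> a - a' = b - b' \<and> int k dvd a - a'}"
    then show "(y, x) \<in> {((a, b), a', b'). (a, b) \<in> inversions t \<and> (a', b') \<in> inversions t \<and> a - a' = b - b' \<and> int k dvd a - a'}"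
      by (cases x, cases y) (auto simp: dvd_diff_commute)
  next
    fix x y z assume "(x, y) \<in> {((a, b), a', b'). (a, b) \<in> inversions t \<and> (a', b') \<in> inversions t \<and> a - a' = b - b' \<and> int k dvd a - a'}"
      "(y, z) \<in> {((a, b), a', b'). (a, b) \<in> inversions t \<and> (a', b') \<in> inversions t \<and> a - a' = b - b' \<and> int k dvd a - a'}"
    then show "(x, z) \<in> {((a, b), a', b'). (a, b) \<in> inversions t \<and> (a', b') \<in> inversions t \<and> a - a' = b - b' \<and> int k dvd a - a'}"
    proof (cases x, cases y, cases z)
      fix a b a' b' a'' b'' assume xyz: "x = (a,b)" "y = (a',b')" "z = (a'',b'')"
        and h: "(x, y) \<in> {((a, b), a', b'). (a, b) \<in> inversions t \<and> (a', b') \<in> inversions t \<and> a - a' = b - b' \<and> int k dvd a - a'}"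
        "(y, z) \<in> {((a, b), a', b'). (a, b) \<in> inversions t \<and> (a', b') \<in> inversions t \<and> a - a' = b - b' \<and> int k dvd a - a'}"
      from h xyz have 1: "(a,b) \<in> inversions t" "(a'',b'') \<in> inversions t" "a - a' = b - b'" "a' - a'' = b' - b''"
        "int k dvd a - a'" "int k dvd a' - a''" by auto
      have "int k dvd (a - a') + (a' - a'')" using 1(5,6) by (rule dvd_add)
      then have "int k dvd a - a''" by simp
      then show ?thesis using 1 xyz by simp
    qed
  qed
  have quot: "I // R = (\<lambda>x. R``{x}) ` I" unfolding quotient_def by auto
  define J where "J = {0..<int k} \<times> {0..int k + 2*M}"
  have finJ: "finite J" unfolding J_def by simp
  have sub: "(\<lambda>x. R``{x}) ` I \<subseteq> (\<lambda>x. R``{x}) ` J"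
  proof
    fix X assume "X \<in> (\<lambda>x. R``{x}) ` I"
    then obtain a b where ab: "(a,b) \<in> I" "X = R``{(a,b)}" by auto
    define q where "q = a div int k"
    have inv: "a < b" "t b < t a" using ab unfolding I_def inversions_def by auto
    have ta: "t (a + (-q) * int k) = t a + (-q) * int k" by (rule perZ)
    have tb: "t (b + (-q) * int k) = t b + (-q) * int k" by (rule perZ)
    have I2: "(a - q * int k, b - q * int k) \<in> I" unfolding I_def inversions_def
      using inv ta tb by simp
    have "b - a < 2 * M" using inv disp[of a] disp[of b] by linarith
    moreover have "a - q * int k = a mod int k" unfolding q_def by (simp add: minus_div_mult_eq_mod)
    moreover have "0 \<le> a mod int k" "a mod int k < int k" using kpos by simp_all
    ultimately have J2: "(a - q * int k, b - q * int k) \<in> J" unfolding J_def using inv by auto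
    have "((a,b), (a - q * int k, b - q * int k)) \<in> R"
      unfolding R_def k_equiv_def using ab(1) I2 unfolding I_def by auto
    then have "R``{(a,b)} = R``{(a - q * int k, b - q * int k)}" by (rule equiv_class_eq[OF eqv])
    then show "X \<in> (\<lambda>x. R``{x}) ` J" using ab J2 by auto
  qed
  have fin: "finite (I // R)" unfolding quot using sub finJ by (meson finite_imageI finite_subset)
  define P where "P = {(a::int, b::int). 0 \<le> a \<and> a < b \<and> b \<le> int g}"
  have PI: "P \<subseteq> I" unfolding P_def I_def inversions_def using val by auto
  have inj: "inj_on (\<lambda>x. R``{x}) P"
  proof (rule inj_onI)
    fix x y assume xy: "x \<in> P" "y \<in> P" "R``{x} = R``{y}"
    then have "(x, y) \<in> R" using eq_equiv_class_iff[OF eqv] PI by blast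
    then obtain a b a' b' where e: "x = (a,b)" "y = (a',b')" "a - a' = b - b'" "int k dvd (a - a')"
      unfolding R_def k_equiv_def by auto
    have "\<bar>a - a'\<bar> < int k" using xy(1,2) e gk unfolding P_def by auto
    then have "a - a' = 0" using e(4) dvd_imp_le_int[of "a - a'" "int k"] by fastforce
    then show "x = y" using e by simp
  qed
  have cP: "card P = (g+1) choose 2" unfolding P_def by (rule card_pairs)
  have "(g+1) choose 2 = card ((\<lambda>x. R``{x}) ` P)" using card_image[OF inj] cP by simp
  also have "\<dots> \<le> card (I // R)" by (rule card_mono[OF fin]) (use PI quot in auto)
  finally show ?thesis unfolding inv_k_def I_def R_def .
qed



theorem mainTheorem19:
  fixes g :: nat and ns :: "nat \<Rightarrow> nat"
  assumes "g \<ge> 2"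
    and "\<forall>\<alpha>\<le>g. ns \<alpha> > 0"
    and "submodular (banana_V g ns) (banana_m g ns) (0, 0) (0, ns 0)
           (\<lambda>x. int g * ind (0, ns 0) x)"
  shows "(\<forall>b. 0 \<le> b \<and> b \<le> int g \<longrightarrow>
            trans_perm (banana_V g ns) (banana_m g ns) (0, 0) (0, ns 0)
              (\<lambda>x. int g * ind (0, ns 0) x) b = int g - b)
       \<and> torsion_order (banana_V g ns) (banana_m g ns) (0, 0) (0, ns 0) \<ge> g
       \<and> inv_k (torsion_order (banana_V g ns) (banana_m g ns) (0, 0) (0, ns 0))
               (trans_perm (banana_V g ns) (banana_m g ns) (0, 0) (0, ns 0)
                  (\<lambda>x. int g * ind (0, ns 0) x))
           \<ge> (g + 1) choose 2"
proof -
  interpret ban g ns using assms(2) by unfold_locales auto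
  define k where "k = torsion_order (banana_V g ns) (banana_m g ns) (0, 0) (0, ns 0)"
  have kex: "k \<ge> 1 \<and> lin_equiv (banana_V g ns) (banana_m g ns) (\<lambda>x. int k * ind (0,0) x) (\<lambda>x. int k * ind (0, ns 0) x)"
    unfolding k_def torsion_order_def by (rule LeastI[of _ Kt]) (use Kt_pos Ktor in auto)
  interpret T: tm "banana_V g ns" "banana_m g ns" "(0,0)" "(0, ns 0)" k
    "int (card (banana_V g ns)) * int (LL * Kt)" "\<lambda>x. int g * ind (0, ns 0) x"
    by unfold_locales (use uV vV n0 kex assms(3) bigdeg finBV Bm_sym in auto)
  have tp: "trans_perm (banana_V g ns) (banana_m g ns) (0,0) (0, ns 0) (\<lambda>x. int g * ind (0, ns 0) x) = T.tau"
    by (rule T.trans_perm_tau)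
  have degD: "degree (banana_V g ns) (\<lambda>x. int g * ind (0, ns 0) x) = int g" by (rule chip_deg[OF vV])
  have tauv: "T.tau b = int g - b" if b: "0 \<le> b" "b \<le> int g" for b
  proof -
    define c where "c = int g - b"
    have c0: "0 \<le> c" using b c_def by simp
    have f1: "T.fr c b = rank (banana_V g ns) (banana_m g ns) (\<lambda>y. int (nat c) * (ind (0,0) y + ind (0, ns 0) y))"
      unfolding T.fr_def using c0 by (intro arg_cong[where f="rank (banana_V g ns) (banana_m g ns)"])
        (auto simp: twist_def fun_eq_iff c_def algebra_simps)
    have l1: "c \<le> T.fr c b" using f1 rank_low[of "nat c"] c0 by simp
    have l4: "c - 1 \<le> T.fr (c-1) (b+1)"
    proof (cases "1 \<le> c")
      case True
      have "T.fr (c-1) (b+1) = rank (banana_V g ns) (banana_m g ns) (\<lambda>y. int (nat (c-1)) * (ind (0,0) y + ind (0, ns 0) y))"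
        unfolding T.fr_def using True by (intro arg_cong[where f="rank (banana_V g ns) (banana_m g ns)"])
          (auto simp: twist_def fun_eq_iff c_def algebra_simps)
      then show ?thesis using rank_low[of "nat (c-1)"] True by simp
    next
      case False
      have "-1 \<le> T.fr (c-1) (b+1)" unfolding T.fr_def by (rule rank_ge_m1)
      then show ?thesis using False c0 by linarith
    qed
    have u2: "T.fr (c-1) b \<le> c - 1"
    proof (cases "1 \<le> c")
      case True
      have "T.fr (c-1) b = rank (banana_V g ns) (banana_m g ns) (\<lambda>x. (c-1) * ind (0,0) x + c * ind (0, ns 0) x)"
        unfolding T.fr_def by (intro arg_cong[where f="rank (banana_V g ns) (banana_m g ns)"])
          (auto simp: twist_def fun_eq_iff c_def algebra_simps)
      then show ?thesis using rank_up1[of c] True c_def b by simp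
    next
      case False
      then have "c = 0" using c0 by simp
      then have "T.fr (c-1) b = -1" by (intro T.fr_neg) (use degD c_def \<open>c = 0\<close> in linarith)
      then show ?thesis using \<open>c = 0\<close> by simp
    qed
    have u3: "T.fr c (b+1) \<le> c - 1"
    proof (cases "1 \<le> c")
      case True
      have "T.fr c (b+1) = rank (banana_V g ns) (banana_m g ns) (\<lambda>x. c * ind (0,0) x + (c-1) * ind (0, ns 0) x)"
        unfolding T.fr_def by (intro arg_cong[where f="rank (banana_V g ns) (banana_m g ns)"])
          (auto simp: twist_def fun_eq_iff c_def algebra_simps)
      then show ?thesis using rank_up2[of c] True c_def b by simp
    next
      case False
      then have "c = 0" using c0 by simp
      then have "T.fr c (b+1) = -1" by (intro T.fr_neg) (use degD c_def \<open>c = 0\<close> in linarith)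
      then show ?thesis using \<open>c = 0\<close> by simp
    qed
    have "1 \<le> T.Dl c b" unfolding T.Dl_fr using l1 l4 u2 u3 by linarith
    then have "T.Dl c b = 1" using T.Dl_01[of c b] by linarith
    then show ?thesis using T.tau_eq c_def by blast
  qed
  have gk: "g < k"
  proof (rule ccontr)
    assume "\<not> g < k"
    then have "T.tau (int k) = int g - int k" using tauv by simp
    moreover have "T.tau (0 + int k) = T.tau 0 + int k" by (rule T.tau_per)
    moreover have "T.tau 0 = int g" using tauv by simp
    ultimately show False using kex by simp
  qed
  have "(g+1) choose 2 \<le> inv_k k T.tau"
    by (rule inv_bound[OF T.tau_per tauv gk])
  then show ?thesis using tp tauv gk unfolding k_def by auto
qed


end
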